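(* For every $M \geq 1$ there exist $\delta,\epsilon > 0$, depending only on $M$, such that the following holds. Let $f \colon (\mathbb{W},d_{\mathrm{par}}) \to (\mathbb{H},d)$ be an $M$-bilipschitz map, let $\theta \in [-\pi/2,\pi/2)$, and let $Q \in \mathcal{D}$ satisfy $\beta_{f}(\mathbb{V};Q) < \epsilon$ for some vertical plane $\mathbb{V} \subset \mathbb{H}$ with $\angle(\mathbb{V},\mathbb{W}_{\theta}) = 0$. Then $\mathcal{H}^{3}(\Pi_{\theta}(f(Q))) \geq \delta\mathcal{H}^{3}(Q)$.
   Context: $\mathbb{H}$ is $\mathbb{R}^{3}$ with group law $(x_{1},y_{1},t_{1}) \cdot (x_{2},y_{2},t_{2}) = (x_{1}+x_{2},y_{1}+y_{2},t_{1}+t_{2}+\tfrac{1}{2}(x_{1}y_{2}-x_{2}y_{1}))$, metric $d(p,q) = \|q^{-1}\cdot p\|$ with $\|(x,y,t)\| = \max\{\sqrt{x^{2}+y^{2}},\sqrt{|t|}\}$, $N(E,\delta) = \{p : \operatorname{dist}(p,E) \leq \delta\}$; $\mathcal{H}^{3}$ is $3$-dimensional Hausdorff measure (w.r.t. $d$ on $\mathbb{H}$ and $d_{\mathrm{par}}$ on $\mathbb{W}$). Horizontal lines in $\mathbb{H}$: sets $p \cdot \{(sa,sb,0) : s \in \mathbb{R}\}$, $(a,b) \neq 0$. Vertical planes: sets $\{(x,y,t) : (x,y) \in \lambda\}$, $\lambda \subset \mathbb{R}^{2}$ an affine line. $R_{\theta}(z,t) = (e^{i\theta}z,t)$ with $z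 = x+iy$; $\mathbb{W}_{\theta} = R_{\theta}(\{(0,y,t)\})$; $\Pi(x,y,t) = (0,y,t+\tfrac{1}{2}xy)$ and $\Pi_{\theta} = R_{\theta} \circ \Pi \circ R_{\theta}^{-1}$. A horizontal line not contained in a left translate of the $xt$-plane can be written uniquely as $\{(ay+b,y,\tfrac{1}{2}by+c)\}$; its slope is $|a|$ ($\infty$ otherwise); $\angle(\mathbb{V})$ is the slope of any horizontal line in $\mathbb{V}$, and $\angle(\mathbb{V},\mathbb{W}_{\theta}) := \angle(R_{\theta}^{-1}\mathbb{V})$. $\mathbb{W}$ is $\mathbb{R}^{2}$ with $d_{\mathrm{par}}((y,t),(\xi,\tau)) = \max\{|y-\xi|,|t-\tau|^{1/2}\}$; horizontal lines in $\mathbb{W}$ are $\mathbb{R}\times\{t\}$. $\mathcal{D}$: dyadic parabolic rectangles $Q = [k2^{-n},(k+1)2^{-n}) \times [l4^{-n},(l+1)4^{-n})$, $\ell(Q) = 2^{-n}$. $\beta_{f}(\mathbb{V};Q)$ is the infimum of $\epsilon > 0$ such that for every horizontal line $\ell \subset \mathbb{W}$ there is a horizontal line $L \subset \mathbb{V}$ with $f(\ell \cap Q) \subset N(L,\epsilon\ell(Q))$. *)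

theory Defs
  imports "HOL-Analysis.Analysis"
begin

type_synonym heis = "real \<times> real \<times> real"
type_synonym wpt = "real \<times> real"

definition heis_mult :: "heis \<Rightarrow> heis \<Rightarrow> heis" where
  "heis_mult p q = (case p of (x1, y1, t1) \<Rightarrow> case q of (x2, y2, t2) \<Rightarrow>
      (x1 + x2, y1 + y2, t1 + t2 + (x1 * y2 - x2 * y1) / 2))"

definition heis_inv :: "heis \<Rightarrow> heis" where
  "heis_inv p = (case p of (x, y, t) \<Rightarrow> (-x, -y, -t))"

definition heis_norm :: "heis \<Rightarrow> real" where
  "heis_norm p = (case p of (x, y, t) \<Rightarrow> max (sqrt (x\<^sup>2 + y\<^sup>2)) (sqrt \<bar>t\<bar>))"

definition heis_dist :: "heis \<Rightarrow> heis \<Rightarrow> real" where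
  "heis_dist p q = heis_norm (heis_mult (heis_inv q) p)"

definition dpar :: "wpt \<Rightarrow> wpt \<Rightarrow> real" where
  "dpar a b = (case a of (y, t) \<Rightarrow> case b of (\<xi>, \<tau>) \<Rightarrow> max \<bar>y - \<xi>\<bar> (sqrt \<bar>t - \<tau>\<bar>))"

definition heis_setdist :: "heis \<Rightarrow> heis set \<Rightarrow> real" where
  "heis_setdist p E = Inf ((\<lambda>q. heis_dist p q) ` E)"

definition heis_nbhd :: "heis set \<Rightarrow> real \<Rightarrow> heis set" where
  "heis_nbhd E \<delta> = {p. heis_setdist p E \<le> \<delta>}"

definition heis_hline :: "heis set \<Rightarrow> bool" where
  "heis_hline L \<longleftrightarrow> (\<exists>p a b. (a, b) \<noteq> (0, 0) \<and>
      L = {heis_mult p (s * a, s * b, 0) | s. True})"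

definition vertical_plane :: "heis set \<Rightarrow> bool" where
  "vertical_plane V \<longleftrightarrow> (\<exists>a b c. (a, b) \<noteq> (0::real, 0::real) \<and>
      V = {(x, y, t). a * x + b * y = c})"

definition rot :: "real \<Rightarrow> heis \<Rightarrow> heis" where
  "rot \<theta> p = (case p of (x, y, t) \<Rightarrow>
      (cos \<theta> * x - sin \<theta> * y, sin \<theta> * x + cos \<theta> * y, t))"

definition W_theta :: "real \<Rightarrow> heis set" where
  "W_theta \<theta> = rot \<theta> ` {(0, y, t) | y t. True}"

definition proj_Pi :: "heis \<Rightarrow> heis" where
  "proj_Pi p = (case p of (x, y, t) \<Rightarrow> (0, y, t + x * y / 2))"

definition proj_Pi_theta :: "real \<Rightarrow> heis \<Rightarrow> heis" where
  "proj_Pi_theta \<theta> = rot \<theta> \<circ> proj_Pi \<circ> rot (-\<theta>)"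

definition hline_form :: "real \<Rightarrow> real \<Rightarrow> real \<Rightarrow> heis set" where
  "hline_form a b c = {(a * y + b, y, b * y / 2 + c) | y. True}"

definition hline_slope :: "heis set \<Rightarrow> ereal" where
  "hline_slope L = (if \<exists>a b c. L = hline_form a b c
      then ereal \<bar>THE a. \<exists>b c. L = hline_form a b c\<bar> else \<infinity>)"

definition vplane_angle :: "heis set \<Rightarrow> ereal" where
  "vplane_angle V = hline_slope (SOME L. heis_hline L \<and> L \<subseteq> V)"

definition vplane_angle_W :: "heis set \<Rightarrow> real \<Rightarrow> ereal" where
  "vplane_angle_W V \<theta> = vplane_angle (rot (-\<theta>) ` V)"

definition dyadic_rect :: "int \<Rightarrow> int \<Rightarrow> int \<Rightarrow> wpt set" where
  "dyadic_rect k l n =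
     {real_of_int k * 2 powr (- real_of_int n) ..< real_of_int (k + 1) * 2 powr (- real_of_int n)}
   \<times> {real_of_int l * 4 powr (- real_of_int n) ..< real_of_int (l + 1) * 4 powr (- real_of_int n)}"

definition side_len :: "int \<Rightarrow> real" where
  "side_len n = 2 powr (- real_of_int n)"

definition W_hline :: "real \<Rightarrow> wpt set" where
  "W_hline t = UNIV \<times> {t}"

definition beta :: "(wpt \<Rightarrow> heis) \<Rightarrow> heis set \<Rightarrow> int \<Rightarrow> int \<Rightarrow> int \<Rightarrow> ereal" where
  "beta f V k l n = Inf {ereal \<epsilon> | \<epsilon>. \<epsilon> > 0 \<and>
      (\<forall>t. \<exists>L. heis_hline L \<and> L \<subseteq> V \<and>
          f ` (W_hline t \<inter> dyadic_rect k l n) \<subseteq> heis_nbhd L (\<epsilon> * side_len n))}"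

definition bilipschitz :: "real \<Rightarrow> (wpt \<Rightarrow> heis) \<Rightarrow> bool" where
  "bilipschitz M f \<longleftrightarrow> (\<forall>p q. dpar p q / M \<le> heis_dist (f p) (f q)
                               \<and> heis_dist (f p) (f q) \<le> M * dpar p q)"

definition mdiam :: "('a \<Rightarrow> 'a \<Rightarrow> real) \<Rightarrow> 'a set \<Rightarrow> ennreal" where
  "mdiam d E = (SUP x\<in>E. SUP y\<in>E. ennreal (d x y))"

definition hausdorff_content :: "('a \<Rightarrow> 'a \<Rightarrow> real) \<Rightarrow> real \<Rightarrow> real \<Rightarrow> 'a set \<Rightarrow> ennreal" where
  "hausdorff_content d s \<delta> A = (INF C \<in> {C :: nat \<Rightarrow> 'a set.
        A \<subseteq> (\<Union>i. C i) \<and> (\<forall>i. mdiam d (C i) \<le> ennreal \<delta>)}.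
      (\<Sum>i. ennreal (enn2real (mdiam d (C i)) powr s)))"

definition hausdorff_measure :: "('a \<Rightarrow> 'a \<Rightarrow> real) \<Rightarrow> real \<Rightarrow> 'a set \<Rightarrow> ennreal" where
  "hausdorff_measure d s A = (SUP \<delta> \<in> {0<..}. hausdorff_content d s \<delta> A)"

end

theory Submission
  imports Defs "HOL-Analysis.Analysis"
begin

definition hy :: "heis \<Rightarrow> real" where "hy p = fst (snd p)"
definition TB :: "real \<Rightarrow> heis \<Rightarrow> real" where
  "TB B p = snd (snd p) + fst p * fst (snd p) / 2 - B * fst (snd p)"

lemma heis_dist_explicit:
  "heis_dist (x1, y1, t1) (x2, y2, t2) =
     max (sqrt ((x1 - x2)\<^sup>2 + (y1 - y2)\<^sup>2)) (sqrt \<bar>t1 - t2 + (x1 * y2 - x2 * y1) / 2\<bar>)"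
  unfolding heis_dist_def heis_norm_def heis_mult_def heis_inv_def
  by (simp add: power2_commute algebra_simps)

lemma cross_le: "\<bar>x1 * y2 - x2 * y1\<bar> \<le> sqrt (x1\<^sup>2 + y1\<^sup>2) * sqrt (x2\<^sup>2 + y2\<^sup>2)"
proof -
  have "(x1 * y2 - x2 * y1)\<^sup>2 \<le> (x1\<^sup>2 + y1\<^sup>2) * (x2\<^sup>2 + y2\<^sup>2)"
  proof -
    have "(x1\<^sup>2 + y1\<^sup>2) * (x2\<^sup>2 + y2\<^sup>2) = (x1 * y2 - x2 * y1)\<^sup>2 + (x1*x2+y1*y2)\<^sup>2"
      by (simp add: power2_eq_square algebra_simps)
    then show ?thesis by simp
  qed
  then have "sqrt ((x1 * y2 - x2 * y1)\<^sup>2) \<le> sqrt ((x1\<^sup>2 + y1\<^sup>2) * (x2\<^sup>2 + y2\<^sup>2))"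
    using real_sqrt_le_mono by blast
  then show ?thesis by (simp add: real_sqrt_mult)
qed

lemma heis_norm_nonneg: "heis_norm p \<ge> 0"
  unfolding heis_norm_def by (auto split: prod.splits simp: le_max_iff_disj)

lemma heis_norm_triangle: "heis_norm (heis_mult a b) \<le> heis_norm a + heis_norm b"
proof -
  obtain x1 y1 t1 x2 y2 t2 where ab: "a = (x1,y1,t1)" "b = (x2,y2,t2)" by (cases a, cases b) auto
  define e1 where "e1 = sqrt (x1\<^sup>2 + y1\<^sup>2)"
  define e2 where "e2 = sqrt (x2\<^sup>2 + y2\<^sup>2)"
  define na where "na = heis_norm a"
  define nb where "nb = heis_norm b"
  have na: "na = max e1 (sqrt \<bar>t1\<bar>)" unfolding na_def e1_def ab heis_norm_def by simp
  have nb: "nb = max e2 (sqrt \<bar>t2\<bar>)" unfolding nb_def e2_def ab heis_norm_def by simp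
  have e1: "0 \<le> e1" "e1 \<le> na" using na e1_def by auto
  have e2: "0 \<le> e2" "e2 \<le> nb" using nb e2_def by auto
  have t1: "\<bar>t1\<bar> \<le> na\<^sup>2"
  proof -
    have "sqrt \<bar>t1\<bar> \<le> na" using na by simp
    then have "(sqrt \<bar>t1\<bar>)\<^sup>2 \<le> na\<^sup>2" by (intro power_mono) auto
    then show ?thesis by simp
  qed
  have t2: "\<bar>t2\<bar> \<le> nb\<^sup>2"
  proof -
    have "sqrt \<bar>t2\<bar> \<le> nb" using nb by simp
    then have "(sqrt \<bar>t2\<bar>)\<^sup>2 \<le> nb\<^sup>2" by (intro power_mono) auto
    then show ?thesis by simp
  qed
  have cr: "\<bar>x1 * y2 - x2 * y1\<bar> \<le> na * nb"
    using cross_le[of x1 y2 x2 y1] e1 e2 unfolding e1_def[symmetric] e2_def[symmetric]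
    by (meson order_trans mult_mono)
  have h1: "sqrt ((x1 + x2)\<^sup>2 + (y1 + y2)\<^sup>2) \<le> na + nb"
    using real_sqrt_sum_squares_triangle_ineq[of x1 x2 y1 y2] e1 e2
    unfolding e1_def e2_def by linarith
  have "\<bar>t1 + t2 + (x1 * y2 - x2 * y1) / 2\<bar> \<le> (na + nb)\<^sup>2"
  proof -
    have "\<bar>t1 + t2 + (x1 * y2 - x2 * y1) / 2\<bar> \<le> \<bar>t1\<bar> + \<bar>t2\<bar> + \<bar>x1 * y2 - x2 * y1\<bar> / 2"
      by (simp add: abs_triangle_ineq order_trans[OF abs_triangle_ineq])
    also have "\<dots> \<le> na\<^sup>2 + nb\<^sup>2 + na * nb / 2" using t1 t2 cr by simp
    also have "\<dots> \<le> (na + nb)\<^sup>2" using e1 e2 by (simp add: power2_eq_square algebra_simps)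
    finally show ?thesis .
  qed
  then have h2: "sqrt \<bar>t1 + t2 + (x1 * y2 - x2 * y1) / 2\<bar> \<le> na + nb"
    using e1 e2 real_le_lsqrt by auto
  have eq: "heis_norm (heis_mult a b) = max (sqrt ((x1 + x2)\<^sup>2 + (y1 + y2)\<^sup>2)) (sqrt \<bar>t1 + t2 + (x1 * y2 - x2 * y1) / 2\<bar>)"
    by (simp add: ab heis_mult_def heis_norm_def)
  show ?thesis using h1 h2 unfolding eq na_def nb_def by simp
qed

lemma heis_mult_assoc: "heis_mult (heis_mult a b) c = heis_mult a (heis_mult b c)"
  by (cases a, cases b, cases c) (simp add: heis_mult_def; simp add: field_simps)

lemma heis_inv_mult: "heis_mult (heis_inv a) a = (0,0,0)" "heis_mult a (heis_inv a) = (0,0,0)"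
  by (cases a, simp add: heis_mult_def heis_inv_def)+

lemma heis_mult_0: "heis_mult (0,0,0) a = a"
  by (cases a, simp add: heis_mult_def)

lemma heis_norm_inv: "heis_norm (heis_inv a) = heis_norm a"
  by (cases a, simp add: heis_norm_def heis_inv_def)

lemma heis_inv_prod: "heis_inv (heis_mult a b) = heis_mult (heis_inv b) (heis_inv a)"
  by (cases a, cases b) (simp add: heis_mult_def heis_inv_def; simp add: field_simps)

lemma heis_inv_inv: "heis_inv (heis_inv a) = a"
  by (cases a) (simp add: heis_inv_def)

lemma heis_dist_sym: "heis_dist p q = heis_dist q p"
proof -
  have "heis_inv (heis_mult (heis_inv q) p) = heis_mult (heis_inv p) q"
    by (simp add: heis_inv_prod heis_inv_inv)
  then show ?thesis unfolding heis_dist_def by (metis heis_norm_inv)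
qed

lemma heis_dist_triangle: "heis_dist p r \<le> heis_dist p q + heis_dist q r"
proof -
  have "heis_mult (heis_inv r) p = heis_mult (heis_mult (heis_inv r) q) (heis_mult (heis_inv q) p)"
  proof -
    have "heis_mult (heis_mult (heis_inv r) q) (heis_mult (heis_inv q) p)
        = heis_mult (heis_inv r) (heis_mult (heis_mult q (heis_inv q)) p)"
      by (simp add: heis_mult_assoc)
    also have "\<dots> = heis_mult (heis_inv r) p" by (simp add: heis_inv_mult heis_mult_0)
    finally show ?thesis by simp
  qed
  then show ?thesis unfolding heis_dist_def using heis_norm_triangle by (metis add.commute)
qed

lemma heis_dist_nonneg: "heis_dist p q \<ge> 0" unfolding heis_dist_def by (rule heis_norm_nonneg)

lemma hy_le_dist: "\<bar>hy p - hy q\<bar> \<le> heis_dist p q"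
proof -
  obtain x1 y1 t1 x2 y2 t2 where ab: "p = (x1,y1,t1)" "q = (x2,y2,t2)" by (cases p, cases q) auto
  have "\<bar>y1 - y2\<bar> \<le> sqrt ((x1 - x2)\<^sup>2 + (y1 - y2)\<^sup>2)" by (rule real_sqrt_ge_abs2)
  then show ?thesis unfolding ab hy_def heis_dist_explicit by (simp add: le_max_iff_disj)
qed


lemma rot_eq: "rot c (x,y,t) = (cos c * x - sin c * y, sin c * x + cos c * y, t)"
  by (simp add: rot_def)

lemma rot_rot: "rot c (rot (-c) p) = p" "rot (-c) (rot c p) = p"
proof -
  obtain x y t where p: "p = (x,y,t)" by (cases p) auto
  obtain s co where sc: "sin c = s" "cos c = co" by blast
  have one: "s * s + co * co = 1" using sc sin_cos_squared_add[of c] by (simp add: power2_eq_square)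
  have "co * (co * x + s * y) - s * (co * y - s * x) = (s * s + co * co) * x"
       "s * (co * x + s * y) + co * (co * y - s * x) = (s * s + co * co) * y"
       "co * (co * x - s * y) + s * (s * x + co * y) = (s * s + co * co) * x"
       "co * (s * x + co * y) - s * (co * x - s * y) = (s * s + co * co) * y"
    by (simp_all add: algebra_simps)
  then have e: "co * (co * x + s * y) - s * (co * y - s * x) = x"
       "s * (co * x + s * y) + co * (co * y - s * x) = y"
       "co * (co * x - s * y) + s * (s * x + co * y) = x"
       "co * (s * x + co * y) - s * (co * x - s * y) = y" using one by simp_all
  show "rot c (rot (-c) p) = p" unfolding p rot_eq sin_minus cos_minus sc
    using e(1,2) by (simp add: algebra_simps)
  show "rot (-c) (rot c p) = p" unfolding p rot_eq sin_minus cos_minus sc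
    using e(3,4) by (simp add: algebra_simps)
qed

lemma rot_mult: "rot c (heis_mult p q) = heis_mult (rot c p) (rot c q)"
proof -
  obtain x y t where p: "p = (x,y,t)" by (cases p) auto
  obtain x' y' t' where q: "q = (x',y',t')" by (cases q) auto
  obtain s co where sc: "sin c = s" "cos c = co" by blast
  have one: "s * s + co * co = 1" using sc sin_cos_squared_add[of c] by (simp add: power2_eq_square)
  have "(co * x - s * y) * (s * x' + co * y') - (co * x' - s * y') * (s * x + co * y)
     = (s * s + co * co) * (x * y' - x' * y)" by (simp add: algebra_simps)
  then have e: "(co * x - s * y) * (s * x' + co * y') - (co * x' - s * y') * (s * x + co * y)
     = x * y' - x' * y" using one by simp
  have e': "(x * y' - x' * y) / 2 = ((co * x - s * y) * (s * x' + co * y') - (co * x' - s * y') * (s * x + co * y)) / 2"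
    using e by simp
  show ?thesis unfolding p q heis_mult_def prod.case rot_eq sc e' by (simp add: algebra_simps)
qed

lemma rot_dist: "heis_dist (rot c p) (rot c q) = heis_dist p q"
proof -
  obtain x y t where p: "p = (x,y,t)" by (cases p) auto
  obtain x' y' t' where q: "q = (x',y',t')" by (cases q) auto
  obtain s co where sc: "sin c = s" "cos c = co" by blast
  have one: "s * s + co * co = 1" using sc sin_cos_squared_add[of c] by (simp add: power2_eq_square)
  have "(co * x - s * y - (co * x' - s * y'))\<^sup>2 + (s * x + co * y - (s * x' + co * y'))\<^sup>2
     = (s * s + co * co) * ((x - x')\<^sup>2 + (y - y')\<^sup>2)"
    by (simp add: power2_eq_square algebra_simps)
  then have e1: "(co * x - s * y - (co * x' - s * y'))\<^sup>2 + (s * x + co * y - (s * x' + co * y'))\<^sup>2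
     = (x - x')\<^sup>2 + (y - y')\<^sup>2" using one by simp
  have "(co * x - s * y) * (s * x' + co * y') - (co * x' - s * y') * (s * x + co * y)
     = (s * s + co * co) * (x * y' - x' * y)" by (simp add: algebra_simps)
  then have e2: "(co * x - s * y) * (s * x' + co * y') - (co * x' - s * y') * (s * x + co * y)
     = x * y' - x' * y" using one by simp
  show ?thesis unfolding p q rot_eq sc by (simp only: heis_dist_explicit e1 e2)
qed

lemma rot_hor: "\<exists>a' b'. rot c (s * a, s * b, 0) = (s * a', s * b', 0)"
  by (rule exI[of _ "cos c * a - sin c * b"], rule exI[of _ "sin c * a + cos c * b"])
    (simp add: rot_def algebra_simps)

lemma lin5: "\<lbrakk>P \<le> S / 2; Z \<le> W + P / 2; 0 \<le> R; S \<le> R; W \<le> R\<rbrakk> \<Longrightarrow> Z \<le> 2 * (R::real)"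
  by linarith

lemma near_est:
  assumes "fst q = B" "heis_dist p q \<le> \<rho>"
  shows "\<bar>hy p - hy q\<bar> \<le> \<rho>" "\<bar>TB B p - TB B q\<bar> \<le> 2 * \<rho>\<^sup>2"
proof -
  show "\<bar>hy p - hy q\<bar> \<le> \<rho>" using hy_le_dist[of p q] assms by linarith
  obtain x y t where p: "p = (x,y,t)" by (cases p) auto
  obtain \<eta> \<tau> where q: "q = (B,\<eta>,\<tau>)" using assms(1) by (cases q) auto
  define w where "w = t - \<tau> + (x * \<eta> - B * y) / 2"
  have d: "heis_dist p q = max (sqrt ((x - B)\<^sup>2 + (y - \<eta>)\<^sup>2)) (sqrt \<bar>w\<bar>)"
    unfolding p q w_def heis_dist_explicit by simp
  have r0: "\<rho> \<ge> 0" using d assms(2) by (smt (verit) real_sqrt_ge_zero)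
  have a: "sqrt ((x - B)\<^sup>2 + (y - \<eta>)\<^sup>2) \<le> \<rho>" "sqrt \<bar>w\<bar> \<le> \<rho>" using d assms(2) by auto
  have a1: "(x - B)\<^sup>2 + (y - \<eta>)\<^sup>2 \<le> \<rho>\<^sup>2" using a(1) r0
    by (metis abs_of_nonneg real_sqrt_abs real_sqrt_le_iff add_nonneg_nonneg zero_le_power2)
  have a2: "\<bar>w\<bar> \<le> \<rho>\<^sup>2" using a(2) r0
    by (metis abs_ge_zero abs_of_nonneg real_sqrt_abs real_sqrt_le_iff)
  have eq: "TB B p - TB B q = w + (x - B) * (y - \<eta>) / 2"
    unfolding TB_def p q w_def by (simp add: field_simps)
  have "\<bar>(x - B) * (y - \<eta>)\<bar> \<le> ((x - B)\<^sup>2 + (y - \<eta>)\<^sup>2) / 2"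
  proof -
    have "0 \<le> (\<bar>x - B\<bar> - \<bar>y - \<eta>\<bar>)\<^sup>2" by simp
    also have "(\<bar>x - B\<bar> - \<bar>y - \<eta>\<bar>)\<^sup>2 = (x - B)\<^sup>2 + (y - \<eta>)\<^sup>2 - 2 * (\<bar>x - B\<bar> * \<bar>y - \<eta>\<bar>)"
      by (simp only: power2_diff power2_abs)
    finally have "2 * (\<bar>x - B\<bar> * \<bar>y - \<eta>\<bar>) \<le> (x - B)\<^sup>2 + (y - \<eta>)\<^sup>2" by simp
    then show ?thesis by (simp add: abs_mult)
  qed
  moreover have "\<bar>w + (x - B) * (y - \<eta>) / 2\<bar> \<le> \<bar>w\<bar> + \<bar>(x - B) * (y - \<eta>)\<bar> / 2"
    using abs_triangle_ineq[of w "(x - B) * (y - \<eta>) / 2"] by simp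
  moreover have "0 \<le> \<rho>\<^sup>2" by simp
  ultimately show "\<bar>TB B p - TB B q\<bar> \<le> 2 * \<rho>\<^sup>2" unfolding eq using a1 a2 lin5 by blast
qed

lemma V_dist:
  assumes "fst q = B" "fst q' = B"
  shows "heis_dist q q' = max \<bar>hy q - hy q'\<bar> (sqrt \<bar>TB B q - TB B q'\<bar>)"
proof -
  obtain \<eta> \<tau> where q: "q = (B,\<eta>,\<tau>)" using assms(1) by (cases q) auto
  obtain \<eta>' \<tau>' where q': "q' = (B,\<eta>',\<tau>')" using assms(2) by (cases q') auto
  have eq: "TB B (B,\<eta>,\<tau>) - TB B (B,\<eta>',\<tau>') = \<tau> - \<tau>' + (B * \<eta>' - B * \<eta>) / 2"
    by (simp add: TB_def field_simps)
  show ?thesis unfolding q q' heis_dist_explicit eq[symmetric] by (simp add: hy_def)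
qed

lemma sqrt_add_le: "a \<ge> 0 \<Longrightarrow> b \<ge> 0 \<Longrightarrow> sqrt (a + b) \<le> sqrt a + sqrt b"
  by (smt (verit) real_sqrt_ge_zero real_sqrt_le_mono real_sqrt_mult_self
      real_sqrt_pow2 mult_nonneg_nonneg power2_eq_square sqrt_add_le_add_sqrt)

lemma E2:
  assumes "fst q = B" "fst q' = B" "heis_dist p q \<le> \<rho>" "heis_dist p' q' \<le> \<rho>"
  shows "heis_dist p p' \<le> \<bar>hy p - hy p'\<bar> + sqrt \<bar>TB B p - TB B p'\<bar> + 6 * \<rho>"
proof -
  have r0: "\<rho> \<ge> 0" using assms(3) heis_dist_nonneg[of p q] by linarith
  note n1 = near_est[OF assms(1,3)] and n2 = near_est[OF assms(2,4)]
  have "heis_dist p p' \<le> heis_dist p q + heis_dist q q' + heis_dist q' p'"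
    using heis_dist_triangle[of p p' q] heis_dist_triangle[of q p' q'] by linarith
  also have "\<dots> \<le> 2 * \<rho> + heis_dist q q'" using assms(3,4) heis_dist_sym[of q' p'] by linarith
  also have "heis_dist q q' \<le> \<bar>hy q - hy q'\<bar> + sqrt \<bar>TB B q - TB B q'\<bar>"
    unfolding V_dist[OF assms(1,2)] by simp
  also have "\<bar>hy q - hy q'\<bar> \<le> \<bar>hy p - hy p'\<bar> + 2 * \<rho>" using n1 n2 by linarith
  also have "sqrt \<bar>TB B q - TB B q'\<bar> \<le> sqrt \<bar>TB B p - TB B p'\<bar> + 2 * \<rho>"
  proof -
    have "\<bar>TB B q - TB B q'\<bar> \<le> \<bar>TB B p - TB B p'\<bar> + 4 * \<rho>\<^sup>2" using n1 n2 by linarith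
    then have "sqrt \<bar>TB B q - TB B q'\<bar> \<le> sqrt (\<bar>TB B p - TB B p'\<bar> + (2 * \<rho>)\<^sup>2)"
      by (simp add: power2_eq_square)
    also have "\<dots> \<le> sqrt \<bar>TB B p - TB B p'\<bar> + sqrt ((2 * \<rho>)\<^sup>2)" by (rule sqrt_add_le) auto
    also have "sqrt ((2 * \<rho>)\<^sup>2) = 2 * \<rho>" using r0 by (simp only: real_sqrt_abs)
    finally show ?thesis .
  qed
  finally show ?thesis by linarith
qed

lemma hline_TB:
  assumes "fst P = B" "fst (heis_mult P (u1, u2, 0)) = B"
  shows "TB B (heis_mult P (u1, u2, 0)) = TB B P"
proof -
  obtain y t where P: "P = (B,y,t)" using assms(1) by (cases P) auto
  have u1: "u1 = 0" using assms(2) unfolding P heis_mult_def by simp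
  show ?thesis unfolding P u1 heis_mult_def TB_def by (simp add: field_simps)
qed

lemma rect_meas:
  assumes "a \<le> c" "b \<le> d"
  shows "emeasure lborel ({a..c} \<times> {b..d} :: (real \<times> real) set) = ennreal ((c - a) * (d - b))"
proof -
  have "emeasure (lborel \<Otimes>\<^sub>M lborel) ({a..c} \<times> {b..d} :: (real \<times> real) set)
      = emeasure lborel {a..c} * emeasure lborel {b..d}"
    by (rule lborel.emeasure_pair_measure_Times) auto
  then show ?thesis using assms by (simp add: lborel_prod ennreal_mult)
qed

lemma para_meas:
  fixes B i1 i2 j1 j2 :: real
  assumes "i1 \<le> i2" "j1 \<le> j2"
  defines "P \<equiv> {z :: real \<times> real. fst z \<in> {i1..i2} \<and> snd z - B * fst z \<in> {j1..j2}}"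
  shows "P \<in> sets lborel" "emeasure lborel P = ennreal ((i2 - i1) * (j2 - j1))"
proof -
  have cl: "closed P" unfolding P_def
    by (intro closed_Collect_conj closed_Collect_le continuous_intros)
      (auto simp: atLeastAtMost_iff intro!: closed_Collect_conj closed_Collect_le continuous_intros)
  then show Pm: "P \<in> sets lborel" by (simp add: borel_closed)
  have Pm2: "P \<in> sets (lborel \<Otimes>\<^sub>M lborel)" using Pm by (simp only: lborel_prod)
  have sl: "Pair x -` P = (if x \<in> {i1..i2} then {j1 + B * x .. j2 + B * x} else {})" for x
    unfolding P_def by auto
  have "emeasure (lborel \<Otimes>\<^sub>M lborel) P = (\<integral>\<^sup>+x. emeasure lborel (Pair x -` P) \<partial>lborel)"
    by (rule lborel.emeasure_pair_measure_alt[OF Pm2])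
  also have "\<dots> = (\<integral>\<^sup>+x. ennreal (j2 - j1) * indicator {i1..i2} x \<partial>lborel)"
    using assms(2) by (intro nn_integral_cong) (simp add: sl emeasure_lborel_Icc_eq)
  also have "\<dots> = ennreal (j2 - j1) * emeasure lborel {i1..i2}"
    by (rule nn_integral_cmult_indicator) simp
  also have "\<dots> = ennreal ((i2 - i1) * (j2 - j1))" using assms by (simp add: ennreal_mult mult.commute)
  finally show "emeasure lborel P = ennreal ((i2 - i1) * (j2 - j1))" by (simp add: lborel_prod)
qed


lemma powr3: "(x::real) \<ge> 0 \<Longrightarrow> x powr 3 = x ^ 3"
  by (cases "x = 0") (auto simp: powr_realpow)

lemma mdiam_le:
  assumes "p \<in> C" "p' \<in> C" "mdiam d C \<le> ennreal D"
  shows "d p p' \<le> enn2real (mdiam d C)"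
proof -
  have "ennreal (d p p') \<le> mdiam d C" unfolding mdiam_def
    by (rule SUP_upper2[OF assms(1)], rule SUP_upper2[OF assms(2)]) simp
  moreover have "mdiam d C \<noteq> top" using assms(3) by (metis ennreal_neq_top neq_top_trans)
  then have "mdiam d C < top" by (simp add: top.not_eq_extremum)
  ultimately have "enn2real (ennreal (d p p')) \<le> enn2real (mdiam d C)" by (rule enn2real_mono)
  moreover have "d p p' \<le> enn2real (ennreal (d p p'))" by (cases "d p p' \<ge> 0") (auto simp: ennreal_neg)
  ultimately show ?thesis by linarith
qed

lemma LB:
  fixes S :: "heis set" and h :: "heis \<Rightarrow> real \<times> real" and P :: "(real \<times> real) set"
  assumes hl: "\<And>p p'. p \<in> S \<Longrightarrow> p' \<in> S \<Longrightarrow> dpar (h p) (h p') \<le> heis_dist p p'"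
    and PS: "P \<subseteq> h ` S" and Pge: "ennreal (4 * c) \<le> emeasure lborel P" and c: "c \<ge> 0"
  shows "ennreal c \<le> hausdorff_measure heis_dist 3 S"
proof -
  have "ennreal c \<le> hausdorff_content heis_dist 3 1 S"
    unfolding hausdorff_content_def
  proof (rule INF_greatest)
    fix C :: "nat \<Rightarrow> heis set" assume "C \<in> {C. S \<subseteq> (\<Union>i. C i) \<and> (\<forall>i. mdiam heis_dist (C i) \<le> ennreal 1)}"
    then have cov: "S \<subseteq> (\<Union>i. C i)" and dm: "\<And>i. mdiam heis_dist (C i) \<le> ennreal 1" by auto
    define d where "d i = enn2real (mdiam heis_dist (C i))" for i
    have d0: "d i \<ge> 0" for i unfolding d_def by simp
    have dd: "heis_dist p p' \<le> d i" if "p \<in> C i" "p' \<in> C i" for p p' i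
      unfolding d_def by (rule mdiam_le[OF that dm])
    define z where "z i = (SOME z. z \<in> C i \<inter> S)" for i
    define R where "R i = (if C i \<inter> S = {} then {} else
       {fst (h (z i)) - d i .. fst (h (z i)) + d i} \<times> {snd (h (z i)) - (d i)\<^sup>2 .. snd (h (z i)) + (d i)\<^sup>2})" for i
    have PR: "P \<subseteq> (\<Union>i. R i)"
    proof
      fix x assume "x \<in> P"
      then obtain p where p: "p \<in> S" "x = h p" using PS by auto
      then obtain i where i: "p \<in> C i" using cov by auto
      then have ne: "C i \<inter> S \<noteq> {}" using p by auto
      then have zi: "z i \<in> C i \<inter> S" unfolding z_def by (meson someI_ex ex_in_conv)
      have dp: "dpar (h (z i)) (h p) \<le> d i" using hl[of "z i" p] zi p i dd[of "z i" i p] by auto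
      obtain a b where ab: "h (z i) = (a, b)" by (cases "h (z i)") auto
      obtain a' b' where ab': "h p = (a', b')" by (cases "h p") auto
      have "\<bar>a - a'\<bar> \<le> d i" "sqrt \<bar>b - b'\<bar> \<le> d i" using dp unfolding ab ab' dpar_def by auto
      moreover have "\<bar>b - b'\<bar> \<le> (d i)\<^sup>2"
      proof -
        have "(sqrt \<bar>b - b'\<bar>)\<^sup>2 \<le> (d i)\<^sup>2" by (rule power_mono) (use \<open>sqrt \<bar>b - b'\<bar> \<le> d i\<close> in auto)
        then show ?thesis by simp
      qed
      ultimately have "\<bar>a - a'\<bar> \<le> d i" "\<bar>b - b'\<bar> \<le> (d i)\<^sup>2" by auto
      then have "x \<in> R i" unfolding R_def using ne p(2) ab ab' by auto
      then show "x \<in> (\<Union>i. R i)" by auto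
    qed
    have Rm: "R i \<in> sets lborel" for i unfolding R_def
      by (auto intro!: borel_closed closed_Times)
    have Rle: "emeasure lborel (R i) \<le> ennreal 4 * ennreal ((d i) ^ 3)" for i
    proof (cases "C i \<inter> S = {}")
      case True then show ?thesis unfolding R_def by simp
    next
      case False
      then have "emeasure lborel (R i) = ennreal ((2 * d i) * (2 * (d i)\<^sup>2))"
        unfolding R_def using d0[of i] by (simp add: rect_meas algebra_simps)
      also have "(2 * d i) * (2 * (d i)\<^sup>2) = 4 * (d i) ^ 3"
        by (simp add: power2_eq_square power3_eq_cube)
      also have "ennreal (4 * (d i) ^ 3) = ennreal 4 * ennreal ((d i) ^ 3)"
        using d0[of i] by (simp add: ennreal_mult)
      finally show ?thesis by simp
    qed
    have e4: "ennreal (4 * c) = ennreal 4 * ennreal c" by (rule ennreal_mult) (use c in auto)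
    have "ennreal 4 * ennreal c \<le> emeasure lborel P" using Pge unfolding e4 .
    also have "\<dots> \<le> emeasure lborel (\<Union>i. R i)" proof (rule emeasure_mono[OF PR])
      show "(\<Union>i. R i) \<in> sets lborel" by (rule sets.countable_nat_UN) (simp add: Rm image_subset_iff del: sets_lborel)
    qed
    also have "\<dots> \<le> (\<Sum>i. emeasure lborel (R i))" by (rule emeasure_subadditive_countably) (use Rm in auto)
    also have "\<dots> \<le> (\<Sum>i. ennreal 4 * ennreal ((d i) ^ 3))" by (rule suminf_le[OF Rle summableI summableI])
    also have "\<dots> = ennreal 4 * (\<Sum>i. ennreal ((d i) ^ 3))" by (rule ennreal_suminf_cmult)
    finally have "ennreal 4 * ennreal c \<le> ennreal 4 * (\<Sum>i. ennreal ((d i) ^ 3))" .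
    then have "ennreal c \<le> (\<Sum>i. ennreal ((d i) ^ 3))" by (subst (asm) ennreal_mult_le_mult_iff) auto
    also have "(\<Sum>i. ennreal ((d i) ^ 3)) = (\<Sum>i. ennreal (enn2real (mdiam heis_dist (C i)) powr 3))"
    proof -
      have "d i powr 3 = d i ^ 3" for i using powr3[OF d0[of i]] .
      then show ?thesis by (simp only: d_def[symmetric])
    qed
    finally show "ennreal c \<le> (\<Sum>i. ennreal (enn2real (mdiam heis_dist (C i)) powr 3))" .
  qed
  also have "\<dots> \<le> hausdorff_measure heis_dist 3 S" unfolding hausdorff_measure_def
    by (rule SUP_upper) auto
  finally show ?thesis .
qed

lemma PM:
  fixes F1 F2 :: "real \<times> real \<Rightarrow> real"
  assumes ab: "a1 \<le> b1" "a2 \<le> b2"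
    and c1: "continuous_on ({a1..b1} \<times> {a2..b2}) F1"
    and c2: "continuous_on ({a1..b1} \<times> {a2..b2}) F2"
    and e1: "\<And>t. t \<in> {a2..b2} \<Longrightarrow> F1 (a1, t) \<le> 0 \<and> F1 (b1, t) \<ge> 0"
    and e2: "\<And>y. y \<in> {a1..b1} \<Longrightarrow> F2 (y, a2) \<le> 0 \<and> F2 (y, b2) \<ge> 0"
  shows "\<exists>p \<in> {a1..b1} \<times> {a2..b2}. F1 p = 0 \<and> F2 p = 0"
proof -
  define S where "S = {a1..b1} \<times> {a2..b2}"
  define G where "G p = (max a1 (min b1 (fst p - F1 p)), max a2 (min b2 (snd p - F2 p)))" for p
  have S: "S = cbox (a1,a2) (b1,b2)" unfolding S_def by (simp add: cbox_Pair_eq)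
  have cG: "continuous_on S G" unfolding G_def S_def
    by (intro continuous_intros c1 c2)
  have GS: "G \<in> S \<rightarrow> S" unfolding G_def S_def using ab by auto
  have ne: "S \<noteq> {}" unfolding S_def using ab by auto
  obtain p where p: "p \<in> S" "G p = p"
    using brouwer[of S G, OF _ _ ne cG GS] S by (metis compact_cbox convex_box(1))
  obtain y t where yt: "p = (y, t)" by (cases p) auto
  have y: "y \<in> {a1..b1}" and t: "t \<in> {a2..b2}" using p(1) yt S_def by auto
  have fy: "max a1 (min b1 (y - F1 p)) = y" and ft: "max a2 (min b2 (t - F2 p)) = t"
    using p(2) yt unfolding G_def by auto
  have "F1 p = 0"
  proof (rule ccontr)
    assume "F1 p \<noteq> 0"
    then consider "F1 p > 0" | "F1 p < 0" by linarith
    then show False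
    proof cases
      case 1
      then have "y = a1" using fy y by (auto simp: max_def min_def split: if_splits)
      then show False using e1[OF t] 1 yt by auto
    next
      case 2
      then have "y = b1" using fy y by (auto simp: max_def min_def split: if_splits)
      then show False using e1[OF t] 2 yt by auto
    qed
  qed
  moreover have "F2 p = 0"
  proof (rule ccontr)
    assume "F2 p \<noteq> 0"
    then consider "F2 p > 0" | "F2 p < 0" by linarith
    then show False
    proof cases
      case 1
      then have "t = a2" using ft t by (auto simp: max_def min_def split: if_splits)
      then show False using e2[OF y] 1 yt by auto
    next
      case 2
      then have "t = b2" using ft t by (auto simp: max_def min_def split: if_splits)
      then show False using e2[OF y] 2 yt by auto
    qed
  qed
  ultimately show ?thesis using p(1) S_def by blast
qed

lemma powr3': "(x::real) \<ge> 0 \<Longrightarrow> x powr 3 = x ^ 3"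
  by (cases "x = 0") (auto simp: powr_realpow)

lemma floor_eq_close:
  assumes "\<lfloor>u\<rfloor> = \<lfloor>u'::real\<rfloor>" shows "\<bar>u - u'\<bar> < 1"
proof -
  have "real_of_int \<lfloor>u\<rfloor> = real_of_int \<lfloor>u'\<rfloor>" using assms by simp
  then show ?thesis using floor_correct[of u] floor_correct[of u'] by linarith
qed

lemma UB:
  fixes a b r :: real
  assumes r: "r > 0"
  shows "hausdorff_measure dpar 3 ({a..<a+r} \<times> {b..<b+r\<^sup>2}) \<le> ennreal (r ^ 3)"
  unfolding hausdorff_measure_def
proof (rule SUP_least)
  fix \<delta> :: real assume "\<delta> \<in> {0<..}"
  then have d: "\<delta> > 0" by simp
  define Q where "Q = {a..<a+r} \<times> {b..<b+r\<^sup>2}"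
  define N :: nat where "N = nat \<lceil>r / \<delta>\<rceil> + 1"
  have N1: "N \<ge> 1" unfolding N_def by simp
  have Npos: "real N > 0" using N1 by simp
  have rN: "r / N \<le> \<delta>"
  proof -
    have "r / \<delta> \<le> real N" unfolding N_def by linarith
    then have "r \<le> \<delta> * N" using d by (simp add: field_simps)
    then show ?thesis using Npos by (simp add: field_simps)
  qed
  define fa where "fa (w::real\<times>real) = nat \<lfloor>(fst w - a) * N / r\<rfloor>" for w
  define fc where "fc (w::real\<times>real) = nat \<lfloor>(snd w - b) * N\<^sup>2 / r\<^sup>2\<rfloor>" for w
  define C where "C i = {w \<in> Q. fa w = i mod N \<and> fc w = i div N}" for i
  have fa_lt: "fa w < N" if "w \<in> Q" for w
  proof -
    have "fst w - a < r" using that unfolding Q_def by auto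
    then have "(fst w - a) * N < r * N" using Npos by (intro mult_strict_right_mono) auto
    then have "(fst w - a) * N / r < N" using r by (simp add: field_simps)
    then have "\<lfloor>(fst w - a) * N / r\<rfloor> < int N" by linarith
    then show ?thesis unfolding fa_def using N1
      by (cases "\<lfloor>(fst w - a) * N / r\<rfloor> \<ge> 0") (auto simp: nat_less_iff)
  qed
  have fc_lt: "fc w < N\<^sup>2" if "w \<in> Q" for w
  proof -
    have "snd w - b < r\<^sup>2" using that unfolding Q_def by auto
    then have "(snd w - b) * N\<^sup>2 < r\<^sup>2 * N\<^sup>2" using Npos by (intro mult_strict_right_mono) auto
    then have "(snd w - b) * N\<^sup>2 / r\<^sup>2 < N\<^sup>2" using r by (simp add: field_simps)
    then have "\<lfloor>(snd w - b) * N\<^sup>2 / r\<^sup>2\<rfloor> < int (N\<^sup>2)" by (simp add: floor_less_iff)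
    then show ?thesis unfolding fc_def using N1
      by (cases "\<lfloor>(snd w - b) * N\<^sup>2 / r\<^sup>2\<rfloor> \<ge> 0") (auto simp: nat_less_iff)
  qed
  have cov: "Q \<subseteq> (\<Union>i. C i)"
  proof
    fix w assume w: "w \<in> Q"
    have "fa w = (fa w + N * fc w) mod N" "fc w = (fa w + N * fc w) div N"
      using fa_lt[OF w] N1 by auto
    then have "w \<in> C (fa w + N * fc w)" unfolding C_def using w by auto
    then show "w \<in> (\<Union>i. C i)" by blast
  qed
  have dpar_le: "dpar w w' \<le> r / N" if "w \<in> C i" "w' \<in> C i" for w w' i
  proof -
    have wq: "w \<in> Q" "w' \<in> Q" and e: "fa w = fa w'" "fc w = fc w'" using that unfolding C_def by auto
    have nn: "(fst w - a) * N / r \<ge> 0" "(fst w' - a) * N / r \<ge> 0"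
      "(snd w - b) * N\<^sup>2 / r\<^sup>2 \<ge> 0" "(snd w' - b) * N\<^sup>2 / r\<^sup>2 \<ge> 0"
      using wq r Npos unfolding Q_def by auto
    have "\<lfloor>(fst w - a) * N / r\<rfloor> = \<lfloor>(fst w' - a) * N / r\<rfloor>"
      using e(1) nn unfolding fa_def by (metis floor_less_zero nat_eq_iff2 not_less)
    then have "\<bar>(fst w - a) * N / r - (fst w' - a) * N / r\<bar> < 1" by (rule floor_eq_close)
    then have "\<bar>(fst w - fst w') * N / r\<bar> < 1" by (simp add: algebra_simps diff_divide_distrib)
    moreover have "\<bar>(fst w - fst w') * N / r\<bar> = \<bar>fst w - fst w'\<bar> * N / r"
      using r Npos by (simp add: abs_mult abs_divide)
    ultimately have "\<bar>fst w - fst w'\<bar> * N / r < 1" by simp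
    then have "\<bar>fst w - fst w'\<bar> * N < r" using r by (simp add: pos_divide_less_eq)
    then have h1: "\<bar>fst w - fst w'\<bar> < r / N" using Npos by (simp add: pos_less_divide_eq)
    have "\<lfloor>(snd w - b) * N\<^sup>2 / r\<^sup>2\<rfloor> = \<lfloor>(snd w' - b) * N\<^sup>2 / r\<^sup>2\<rfloor>"
      using e(2) nn unfolding fc_def by (metis floor_less_zero nat_eq_iff2 not_less)
    then have "\<bar>(snd w - b) * N\<^sup>2 / r\<^sup>2 - (snd w' - b) * N\<^sup>2 / r\<^sup>2\<bar> < 1" by (rule floor_eq_close)
    then have "\<bar>(snd w - snd w') * N\<^sup>2 / r\<^sup>2\<bar> < 1" by (simp add: algebra_simps diff_divide_distrib)
    moreover have "\<bar>(snd w - snd w') * N\<^sup>2 / r\<^sup>2\<bar> = \<bar>snd w - snd w'\<bar> * N\<^sup>2 / r\<^sup>2"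
      using r Npos by (simp add: abs_mult abs_divide del: of_nat_power)
    ultimately have "\<bar>snd w - snd w'\<bar> * N\<^sup>2 / r\<^sup>2 < 1" by (simp only:)
    then have "\<bar>snd w - snd w'\<bar> * N\<^sup>2 < r\<^sup>2" using r by (simp add: pos_divide_less_eq)
    then have "\<bar>snd w - snd w'\<bar> < r\<^sup>2 / N\<^sup>2" using Npos by (simp add: pos_less_divide_eq)
    then have "\<bar>snd w - snd w'\<bar> < (r / N)\<^sup>2" by (simp add: power_divide)
    then have h2: "sqrt \<bar>snd w - snd w'\<bar> < r / N" using r Npos
      by (metis abs_of_pos divide_pos_pos of_nat_0_less_iff real_sqrt_abs real_sqrt_less_mono N1 Npos)
    show ?thesis unfolding dpar_def using h1 h2 by (auto split: prod.splits)
  qed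
  have md: "mdiam dpar (C i) \<le> ennreal (r / N)" for i
    unfolding mdiam_def by (intro SUP_least ennreal_leI dpar_le)
  have empty: "C i = {}" if "i \<notin> {..<N * N\<^sup>2}" for i
  proof (rule ccontr)
    assume "C i \<noteq> {}"
    then obtain w where w: "w \<in> C i" by auto
    then have "w \<in> Q" "fc w = i div N" unfolding C_def by auto
    then have "i div N < N\<^sup>2" using fc_lt by metis
    then have "i < N\<^sup>2 * N" using N1 by (simp add: div_less_iff_less_mult)
    then have "i < N * N\<^sup>2" by (simp add: mult.commute)
    then show False using that by simp
  qed
  have term_le: "ennreal (enn2real (mdiam dpar (C i)) powr 3) \<le> ennreal ((r / N) ^ 3)" for i
  proof -
    have "enn2real (mdiam dpar (C i)) \<le> r / N"
      using enn2real_mono[OF md[of i]] r Npos by simp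
    then have "enn2real (mdiam dpar (C i)) ^ 3 \<le> (r / N) ^ 3" by (intro power_mono) auto
    then show ?thesis by (simp add: powr3' ennreal_leI)
  qed
  have "hausdorff_content dpar 3 \<delta> Q \<le> (\<Sum>i. ennreal (enn2real (mdiam dpar (C i)) powr 3))"
    unfolding hausdorff_content_def
  proof (rule INF_lower)
    have "\<forall>i. mdiam dpar (C i) \<le> ennreal \<delta>"
      using md ennreal_leI[OF rN] order_trans by blast
    then show "C \<in> {C. Q \<subseteq> (\<Union>i. C i) \<and> (\<forall>i. mdiam dpar (C i) \<le> ennreal \<delta>)}" using cov by auto
  qed
  also have "\<dots> = (\<Sum>i<N * N\<^sup>2. ennreal (enn2real (mdiam dpar (C i)) powr 3))"
    by (rule suminf_finite) (auto simp: empty mdiam_def bot_ennreal)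
  also have "\<dots> \<le> (\<Sum>i<N * N\<^sup>2. ennreal ((r / N) ^ 3))" by (intro sum_mono term_le)
  also have "\<dots> = of_nat (N * N\<^sup>2) * ennreal ((r / N) ^ 3)" by simp
  also have "\<dots> = ennreal (real (N * N\<^sup>2) * (r / N) ^ 3)"
    by (subst ennreal_mult) (use r in \<open>simp_all only: ennreal_of_nat_eq_real_of_nat of_nat_0_le_iff zero_le_power divide_nonneg_nonneg less_imp_le\<close>)
  also have "real (N * N\<^sup>2) * (r / N) ^ 3 = r ^ 3" using Npos by (simp add: field_simps power3_eq_cube power2_eq_square)
  finally show "hausdorff_content dpar 3 \<delta> ({a..<a+r} \<times> {b..<b+r\<^sup>2}) \<le> ennreal (r ^ 3)" unfolding Q_def .
qed

lemma hx_le_dist: "\<bar>fst p - fst q\<bar> \<le> heis_dist p q"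
proof -
  obtain x1 y1 t1 x2 y2 t2 where ab: "p = (x1,y1,t1)" "q = (x2,y2,t2)" by (cases p, cases q) auto
  have "\<bar>x1 - x2\<bar> \<le> sqrt ((x1 - x2)\<^sup>2 + (y1 - y2)\<^sup>2)" by (rule real_sqrt_ge_abs1)
  then show ?thesis unfolding ab heis_dist_explicit by (simp add: le_max_iff_disj)
qed

lemma ht_le_dist:
  "\<bar>snd (snd p) - snd (snd q) + (fst p * fst (snd q) - fst q * fst (snd p)) / 2\<bar> \<le> (heis_dist p q)\<^sup>2"
proof -
  obtain x1 y1 t1 x2 y2 t2 where ab: "p = (x1,y1,t1)" "q = (x2,y2,t2)" by (cases p, cases q) auto
  have "sqrt \<bar>t1 - t2 + (x1 * y2 - x2 * y1) / 2\<bar> \<le> heis_dist p q"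
    unfolding ab heis_dist_explicit by simp
  then have "(sqrt \<bar>t1 - t2 + (x1 * y2 - x2 * y1) / 2\<bar>)\<^sup>2 \<le> (heis_dist p q)\<^sup>2"
    by (intro power_mono) auto
  then show ?thesis unfolding ab by simp
qed

lemma dpar_alt: "dpar w w' = max \<bar>fst w - fst w'\<bar> (sqrt \<bar>snd w - snd w'\<bar>)"
  by (cases w, cases w') (simp add: dpar_def)

lemma dpar_tendsto: "((\<lambda>w'. dpar w' w) \<longlongrightarrow> 0) (at w)"
proof -
  have "continuous (at w) (\<lambda>w'. max \<bar>fst w' - fst w\<bar> (sqrt \<bar>snd w' - snd w\<bar>))"
    by (intro continuous_intros)
  then have "((\<lambda>w'. max \<bar>fst w' - fst w\<bar> (sqrt \<bar>snd w' - snd w\<bar>)) \<longlongrightarrow>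
      max \<bar>fst w - fst w\<bar> (sqrt \<bar>snd w - snd w\<bar>)) (at w)"
    by (simp add: continuous_at)
  then show ?thesis by (simp add: dpar_alt)
qed

lemma comp_cont:
  assumes L: "\<And>w w'. heis_dist (g w) (g w') \<le> M * dpar w w'"
  shows "continuous_on UNIV (\<lambda>w. fst (g w))" "continuous_on UNIV (\<lambda>w. fst (snd (g w)))"
    "continuous_on UNIV (\<lambda>w. snd (snd (g w)))"
proof -
  have lim0: "((\<lambda>w'. M * dpar w' w) \<longlongrightarrow> 0) (at w)" for w
    using tendsto_mult_right_zero[OF dpar_tendsto[of w], of M] .
  have cx: "((\<lambda>w'. fst (g w')) \<longlongrightarrow> fst (g w)) (at w)" for w
  proof -
    have "((\<lambda>w'. fst (g w') - fst (g w)) \<longlongrightarrow> 0) (at w)"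
    proof (rule Lim_null_comparison[OF _ lim0])
      show "\<forall>\<^sub>F x in at w. norm (fst (g x) - fst (g w)) \<le> M * dpar x w"
      proof (intro always_eventually allI)
        fix x show "norm (fst (g x) - fst (g w)) \<le> M * dpar x w"
          using hx_le_dist[of "g x" "g w"] L[of x w] by simp
      qed
    qed
    then show ?thesis by (rule LIM_zero_cancel)
  qed
  have cy: "((\<lambda>w'. fst (snd (g w'))) \<longlongrightarrow> fst (snd (g w))) (at w)" for w
  proof -
    have "((\<lambda>w'. fst (snd (g w')) - fst (snd (g w))) \<longlongrightarrow> 0) (at w)"
    proof (rule Lim_null_comparison[OF _ lim0])
      show "\<forall>\<^sub>F x in at w. norm (fst (snd (g x)) - fst (snd (g w))) \<le> M * dpar x w"
      proof (intro always_eventually allI)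
        fix x show "norm (fst (snd (g x)) - fst (snd (g w))) \<le> M * dpar x w"
          using hy_le_dist[of "g x" "g w"] L[of x w] unfolding hy_def by simp
      qed
    qed
    then show ?thesis by (rule LIM_zero_cancel)
  qed
  have ct: "((\<lambda>w'. snd (snd (g w'))) \<longlongrightarrow> snd (snd (g w))) (at w)" for w
  proof -
    define D where "D w' = snd (snd (g w')) - snd (snd (g w)) + (fst (g w') * fst (snd (g w)) - fst (g w) * fst (snd (g w'))) / 2" for w'
    have lim2: "((\<lambda>w'. (M * dpar w' w)\<^sup>2) \<longlongrightarrow> 0) (at w)"
      using tendsto_power[OF lim0[of w], of 2] by simp
    have D0: "(D \<longlongrightarrow> 0) (at w)"
    proof (rule Lim_null_comparison[OF _ lim2])
      show "\<forall>\<^sub>F x in at w. norm (D x) \<le> (M * dpar x w)\<^sup>2"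
      proof (intro always_eventually allI)
        fix x
        have "norm (D x) \<le> (heis_dist (g x) (g w))\<^sup>2" unfolding D_def using ht_le_dist by simp
        also have "\<dots> \<le> (M * dpar x w)\<^sup>2" using L[of x w] heis_dist_nonneg by (intro power_mono) auto
        finally show "norm (D x) \<le> (M * dpar x w)\<^sup>2" .
      qed
    qed
    have cr: "((\<lambda>w'. (fst (g w') * fst (snd (g w)) - fst (g w) * fst (snd (g w'))) / 2) \<longlongrightarrow>
        (fst (g w) * fst (snd (g w)) - fst (g w) * fst (snd (g w))) / 2) (at w)"
      by (rule tendsto_divide[OF tendsto_diff[OF tendsto_mult[OF cx tendsto_const] tendsto_mult[OF tendsto_const cy]] tendsto_const]) simp
    have "((\<lambda>w'. D w' - (fst (g w') * fst (snd (g w)) - fst (g w) * fst (snd (g w'))) / 2) \<longlongrightarrow> 0 - 0) (at w)"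
      using tendsto_diff[OF D0 cr] by simp
    then have "((\<lambda>w'. snd (snd (g w')) - snd (snd (g w))) \<longlongrightarrow> 0) (at w)"
      unfolding D_def by simp
    then show ?thesis by (rule LIM_zero_cancel)
  qed
  show "continuous_on UNIV (\<lambda>w. fst (g w))"
    by (intro continuous_at_imp_continuous_on ballI) (simp add: isCont_def cx)
  show "continuous_on UNIV (\<lambda>w. fst (snd (g w)))"
    by (intro continuous_at_imp_continuous_on ballI) (simp add: isCont_def cy)
  show "continuous_on UNIV (\<lambda>w. snd (snd (g w)))"
    by (intro continuous_at_imp_continuous_on ballI) (simp add: isCont_def ct)
qed

lemma sgn_facts:
  fixes a b :: real
  defines "\<sigma> \<equiv> (if a \<le> b then 1 else -1 :: real)"
  shows "\<sigma> * (b - a) = \<bar>b - a\<bar>" "\<bar>\<sigma> * z\<bar> = \<bar>z\<bar>" "\<sigma> \<noteq> 0"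
  unfolding \<sigma>_def by auto

lemma linL: "(a::real) = b - c / 2 \<Longrightarrow> b \<le> d \<Longrightarrow> e \<le> c \<Longrightarrow> a \<le> d - e / 2"
  by linarith

lemma linR: "(a::real) = b + c / 2 \<Longrightarrow> b \<ge> - d \<Longrightarrow> e \<le> c \<Longrightarrow> a \<ge> - d + e / 2"
  by linarith

lemma core:
  fixes g :: "wpt \<Rightarrow> heis" and B y0 t0 r M :: real
  assumes M1: "M \<ge> 1" and r: "r > 0"
    and bl: "\<And>w w'. dpar w w' / M \<le> heis_dist (g w) (g w')"
    and bu: "\<And>w w'. heis_dist (g w) (g w') \<le> M * dpar w w'"
    and near: "\<And>w. w \<in> {y0..<y0+r} \<times> {t0..<t0+r\<^sup>2} \<Longrightarrow>
                 \<exists>q. fst q = B \<and> heis_dist (g w) q \<le> r / (128 * M ^ 3)"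
    and slice: "\<And>w w'. w \<in> {y0..<y0+r} \<times> {t0..<t0+r\<^sup>2} \<Longrightarrow> w' \<in> {y0..<y0+r} \<times> {t0..<t0+r\<^sup>2} \<Longrightarrow>
                 snd w = snd w' \<Longrightarrow> \<bar>TB B (g w) - TB B (g w')\<bar> \<le> 4 * (r / (128 * M ^ 3))\<^sup>2"
  shows "\<exists>Ys Ts. \<forall>Y' T'. \<bar>Y' - Ys\<bar> \<le> r / (16 * M) \<and> Ts \<le> T' \<and> T' \<le> Ts + r\<^sup>2 / (2048 * M ^ 6) \<longrightarrow>
           (\<exists>w \<in> {y0..<y0+r} \<times> {t0..<t0+r\<^sup>2}. hy (g w) = Y' \<and> TB B (g w) = T')"
proof -
  define Q where "Q = {y0..<y0+r} \<times> {t0..<t0+r\<^sup>2}"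
  define \<rho> where "\<rho> = r / (128 * M ^ 3)"
  define h where "h = r / (8 * M\<^sup>2)"
  define tb where "tb = t0 + h\<^sup>2"
  define y1 where "y1 = y0 + r / 2"
  define Y where "Y w = hy (g w)" for w
  define T where "T w = TB B (g w)" for w
  have M0: "M > 0" using M1 by simp
  have M3: "M ^ 3 \<ge> M"
  proof -
    have "M ^ 3 = M * M\<^sup>2" by (simp add: power3_eq_cube power2_eq_square)
    moreover have "M\<^sup>2 \<ge> 1" using M1 by simp
    ultimately show ?thesis using M1 mult_left_mono[of 1 "M\<^sup>2" M] by simp
  qed
  have rho0: "\<rho> > 0" unfolding \<rho>_def using r M0 by simp
  have rho_le: "4 * \<rho> \<le> r / (32 * M)"
  proof -
    have "4 * \<rho> = r / (32 * M ^ 3)" unfolding \<rho>_def by simp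
    also have "\<dots> \<le> r / (32 * M)" using M3 M0 r by (intro divide_left_mono) auto
    finally show ?thesis .
  qed
  have h0: "h > 0" unfolding h_def using r M0 by simp
  have hle: "h \<le> r / 8"
  proof -
    have "M\<^sup>2 \<ge> 1" using M1 by simp
    then have "r / (8 * M\<^sup>2) \<le> r / 8" using r by (intro divide_left_mono) auto
    then show ?thesis unfolding h_def .
  qed
  have h2lt: "h\<^sup>2 < r\<^sup>2" using h0 hle r by (intro power_strict_mono) auto
  have inQ: "(y, t) \<in> Q" if "y0 \<le> y" "y \<le> y1" "t0 \<le> t" "t \<le> tb" for y t
  proof -
    have "y < y0 + r" using that(2) r unfolding y1_def by simp
    moreover have "t < t0 + r\<^sup>2" using that(4) h2lt unfolding tb_def by simp
    ultimately show ?thesis using that(1,3) unfolding Q_def by simp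
  qed
  have cY: "continuous_on UNIV Y" unfolding Y_def hy_def by (rule comp_cont(2)[OF bu])
  have cT: "continuous_on UNIV T"
  proof -
    note c = comp_cont[OF bu]
    have "continuous_on UNIV (\<lambda>w. snd (snd (g w)) + fst (g w) * fst (snd (g w)) / 2 - B * fst (snd (g w)))"
      by (intro continuous_on_diff continuous_on_add continuous_on_mult continuous_on_divide
          continuous_on_const c) auto
    then show ?thesis unfolding T_def TB_def .
  qed
  have E2': "dpar w w' / M \<le> \<bar>Y w - Y w'\<bar> + sqrt \<bar>T w - T w'\<bar> + 6 * \<rho>" if wQ: "w \<in> Q" and wQ': "w' \<in> Q" for w w'
  proof -
    obtain q where q: "fst q = B" "heis_dist (g w) q \<le> \<rho>" using near wQ unfolding Q_def \<rho>_def by blast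
    obtain q' where q': "fst q' = B" "heis_dist (g w') q' \<le> \<rho>" using near wQ' unfolding Q_def \<rho>_def by blast
    show ?thesis using bl[of w w'] E2[OF q(1) q'(1) q(2) q'(2)] unfolding Y_def T_def by linarith
  qed
  have sl: "\<bar>T w - T w'\<bar> \<le> 4 * \<rho>\<^sup>2" if "w \<in> Q" "w' \<in> Q" "snd w = snd w'" for w w'
    using slice[of w w'] that unfolding Q_def T_def \<rho>_def by simp
  have sq4: "sqrt (4 * \<rho>\<^sup>2) = 2 * \<rho>"
  proof -
    have "4 * \<rho>\<^sup>2 = (2 * \<rho>)\<^sup>2" by (simp add: power2_eq_square)
    then show ?thesis using rho0 by (simp only: real_sqrt_abs)
  qed
  have slq: "sqrt \<bar>T w - T w'\<bar> \<le> 2 * \<rho>" if "w \<in> Q" "w' \<in> Q" "snd w = snd w'" for w w'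
    using real_sqrt_le_mono[OF sl[OF that]] sq4 by simp
  define A0 where "A0 = Y (y0, t0)"
  define A1 where "A1 = Y (y1, t0)"
  have Q00: "(y0, t0) \<in> Q" and Q10: "(y1, t0) \<in> Q" and Q0b: "(y0, tb) \<in> Q" and Q1b: "(y1, tb) \<in> Q"
    using inQ h0 r unfolding y1_def tb_def by auto
  have gapA: "\<bar>A1 - A0\<bar> \<ge> r / (2 * M) - 8 * \<rho>"
  proof -
    have dp: "dpar (y0, t0) (y1, t0) = r / 2" unfolding dpar_alt y1_def using r by simp
    have "r / 2 / M \<le> \<bar>A0 - A1\<bar> + sqrt \<bar>T (y0, t0) - T (y1, t0)\<bar> + 6 * \<rho>"
      using E2'[OF Q00 Q10] unfolding dp A0_def A1_def .
    moreover have "sqrt \<bar>T (y0, t0) - T (y1, t0)\<bar> \<le> 2 * \<rho>" using slq[OF Q00 Q10] by simp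
    moreover have "r / 2 / M = r / (2 * M)" by simp
    moreover have "\<bar>A0 - A1\<bar> = \<bar>A1 - A0\<bar>" by (rule abs_minus_commute)
    ultimately show ?thesis by linarith
  qed
  define \<sigma>1 where "\<sigma>1 = (if A0 \<le> A1 then 1 else -1 :: real)"
  note s1 = sgn_facts[of A0 A1, folded \<sigma>1_def]
  define Ys where "Ys = (A0 + A1) / 2"
  have edge: "\<bar>Y (y, t) - Y (y, t0)\<bar> \<le> r / (8 * M)" if "t0 \<le> t" "t \<le> tb" for y t
  proof -
    have "\<bar>Y (y, t) - Y (y, t0)\<bar> \<le> heis_dist (g (y, t)) (g (y, t0))" unfolding Y_def by (rule hy_le_dist)
    also have "\<dots> \<le> M * dpar (y, t) (y, t0)" by (rule bu)
    also have "dpar (y, t) (y, t0) = sqrt \<bar>t - t0\<bar>" unfolding dpar_alt by simp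
    also have "sqrt \<bar>t - t0\<bar> \<le> h"
    proof -
      have "\<bar>t - t0\<bar> \<le> h\<^sup>2" using that unfolding tb_def by simp
      then have "sqrt \<bar>t - t0\<bar> \<le> sqrt (h\<^sup>2)" by (rule real_sqrt_le_mono)
      then show ?thesis using h0 by simp
    qed
    then have "M * sqrt \<bar>t - t0\<bar> \<le> M * h" using M0 by (intro mult_left_mono) auto
    also have "M * h = r / (8 * M)" unfolding h_def using M0 by (simp add: power2_eq_square field_simps)
    finally show ?thesis .
  qed
  have left: "\<sigma>1 * (Y (y0, t) - Ys) \<le> - 3 * r / (32 * M)" if "t0 \<le> t" "t \<le> tb" for t
  proof -
    have "\<sigma>1 * (Y (y0, t) - Ys) = \<sigma>1 * (Y (y0, t) - A0) - \<bar>A1 - A0\<bar> / 2"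
      using s1(1) unfolding Ys_def by (simp add: algebra_simps)
    moreover have "\<sigma>1 * (Y (y0, t) - A0) \<le> r / (8 * M)"
      using edge[OF that, of y0] s1(2)[of "Y (y0, t) - A0"] unfolding A0_def by linarith
    ultimately have "\<sigma>1 * (Y (y0, t) - Ys) \<le> r / (8 * M) - (r / (2 * M) - 8 * \<rho>) / 2" using gapA by (rule linL)
    moreover have "r / (8 * M) - (r / (2 * M) - 8 * \<rho>) / 2 \<le> - 3 * r / (32 * M)"
      using rho_le M0 by (simp add: field_simps)
    ultimately show ?thesis by linarith
  qed
  have right: "\<sigma>1 * (Y (y1, t) - Ys) \<ge> 3 * r / (32 * M)" if "t0 \<le> t" "t \<le> tb" for t
  proof -
    have "\<sigma>1 * (Y (y1, t) - Ys) = \<sigma>1 * (Y (y1, t) - A1) + \<bar>A1 - A0\<bar> / 2"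
      using s1(1) unfolding Ys_def by (simp add: algebra_simps)
    moreover have "\<sigma>1 * (Y (y1, t) - A1) \<ge> - (r / (8 * M))"
      using edge[OF that, of y1] s1(2)[of "Y (y1, t) - A1"] unfolding A1_def by linarith
    ultimately have "\<sigma>1 * (Y (y1, t) - Ys) \<ge> - (r / (8 * M)) + (r / (2 * M) - 8 * \<rho>) / 2" using gapA by (rule linR)
    moreover have "- (r / (8 * M)) + (r / (2 * M) - 8 * \<rho>) / 2 \<ge> 3 * r / (32 * M)"
      using rho_le M0 by (simp add: field_simps)
    ultimately show ?thesis by linarith
  qed
  have y01: "y0 \<le> y1" unfolding y1_def using r by simp
  have t0b: "t0 \<le> tb" unfolding tb_def by simp
  have cYt: "continuous_on {y0..y1} (\<lambda>y. \<sigma>1 * (Y (y, t) - Ys))" for t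
    by (intro continuous_intros continuous_on_compose2[OF cY]) auto
  have hitY: "\<exists>y. y0 \<le> y \<and> y \<le> y1 \<and> Y (y, t) = Ys" if "t0 \<le> t" "t \<le> tb" for t
  proof -
    have pos: "3 * r / (32 * M) > 0" using r M0 by simp
    have "\<sigma>1 * (Y (y0, t) - Ys) \<le> 0" using left[OF that] pos by linarith
    moreover have "0 \<le> \<sigma>1 * (Y (y1, t) - Ys)" using right[OF that] pos by linarith
    ultimately obtain y where "y0 \<le> y" "y \<le> y1" "\<sigma>1 * (Y (y, t) - Ys) = 0"
      using IVT'[of "\<lambda>y. \<sigma>1 * (Y (y, t) - Ys)" y0 0 y1, OF _ _ y01 cYt] by auto
    then show ?thesis using s1(3) by auto
  qed
  define Ta where "Ta = T (y0, t0)"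
  define Tb where "Tb = T (y0, tb)"
  define G where "G = (r / (32 * M ^ 3))\<^sup>2"
  have gapT: "\<bar>Tb - Ta\<bar> \<ge> G"
  proof (rule ccontr)
    assume "\<not> ?thesis"
    then have lt: "\<bar>Tb - Ta\<bar> < G" by simp
    obtain ya where ya: "y0 \<le> ya" "ya \<le> y1" "Y (ya, t0) = Ys" using hitY[of t0] t0b by auto
    obtain yb where yb: "y0 \<le> yb" "yb \<le> y1" "Y (yb, tb) = Ys" using hitY[of tb] t0b by auto
    have Qa: "(ya, t0) \<in> Q" and Qb: "(yb, tb) \<in> Q" using inQ ya yb t0b by auto
    have "h \<le> dpar (ya, t0) (yb, tb)"
    proof -
      have "sqrt \<bar>t0 - tb\<bar> = h" unfolding tb_def using h0 by simp
      then show ?thesis unfolding dpar_alt by simp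
    qed
    then have "h / M \<le> dpar (ya, t0) (yb, tb) / M" using M0 by (simp add: divide_right_mono)
    also have "\<dots> \<le> sqrt \<bar>T (ya, t0) - T (yb, tb)\<bar> + 6 * \<rho>" using E2'[OF Qa Qb] ya(3) yb(3) by simp
    finally have A: "h / M \<le> sqrt \<bar>T (ya, t0) - T (yb, tb)\<bar> + 6 * \<rho>" .
    have "\<bar>T (ya, t0) - T (yb, tb)\<bar> \<le> G + (8 * \<rho>\<^sup>2)"
      using sl[OF Qa Q00] sl[OF Qb Q0b] lt unfolding Ta_def Tb_def by simp
    then have "sqrt \<bar>T (ya, t0) - T (yb, tb)\<bar> \<le> sqrt (G + 8 * \<rho>\<^sup>2)" by (rule real_sqrt_le_mono)
    also have "\<dots> \<le> sqrt G + sqrt (8 * \<rho>\<^sup>2)" by (rule sqrt_add_le) (auto simp: G_def)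
    also have "sqrt (8 * \<rho>\<^sup>2) \<le> 3 * \<rho>"
      by (rule real_le_lsqrt) (use rho0 in \<open>auto simp: power2_eq_square\<close>)
    also have "sqrt G = r / (32 * M ^ 3)" unfolding G_def using r M0 by simp
    finally have "h / M \<le> r / (32 * M ^ 3) + 9 * \<rho>" using A by linarith
    moreover have "h / M = r / (8 * M ^ 3)" unfolding h_def using M0 by (simp add: power2_eq_square power3_eq_cube)
    moreover have "r / (32 * M ^ 3) + 9 * \<rho> < r / (8 * M ^ 3)" unfolding \<rho>_def using r M0
      by (simp add: field_simps)
    ultimately show False by linarith
  qed
  define Hh where "Hh = r\<^sup>2 / (2048 * M ^ 6)"
  define Ts where "Ts = min Ta Tb + 4 * \<rho>\<^sup>2"
  have GH: "G = 2 * Hh" and rH: "4 * \<rho>\<^sup>2 = Hh / 2" unfolding G_def Hh_def \<rho>_def using M0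
    by (simp_all add: power2_eq_square field_simps power_mult_distrib)
  define \<sigma>2 where "\<sigma>2 = (if Ta \<le> Tb then 1 else -1 :: real)"
  have s2: "\<sigma>2 \<noteq> 0" unfolding \<sigma>2_def by simp
  have botop: "\<sigma>2 * (T (y, t0) - T') \<le> 0 \<and> \<sigma>2 * (T (y, tb) - T') \<ge> 0"
    if "y0 \<le> y" "y \<le> y1" "Ts \<le> T'" "T' \<le> Ts + Hh" for y T'
  proof -
    have e0: "\<bar>T (y, t0) - Ta\<bar> \<le> 4 * \<rho>\<^sup>2" using sl[OF inQ[of y t0] Q00] that t0b unfolding Ta_def by simp
    have eb: "\<bar>T (y, tb) - Tb\<bar> \<le> 4 * \<rho>\<^sup>2" using sl[OF inQ[of y tb] Q0b] that t0b unfolding Tb_def by simp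
    have e0': "T (y, t0) \<le> Ta + 4 * \<rho>\<^sup>2" "T (y, t0) \<ge> Ta - 4 * \<rho>\<^sup>2" using e0 by (simp_all add: abs_le_iff)
    have eb': "T (y, tb) \<le> Tb + 4 * \<rho>\<^sup>2" "T (y, tb) \<ge> Tb - 4 * \<rho>\<^sup>2" using eb by (simp_all add: abs_le_iff)
    show ?thesis
    proof (cases "Ta \<le> Tb")
      case True
      then have "\<sigma>2 = 1" "Ts = Ta + 4 * \<rho>\<^sup>2" "Tb - Ta \<ge> G" unfolding \<sigma>2_def Ts_def using gapT by auto
      then show ?thesis using e0' eb' that GH rH by simp
    next
      case False
      then have "\<sigma>2 = -1" "Ts = Tb + 4 * \<rho>\<^sup>2" "Ta - Tb \<ge> G" unfolding \<sigma>2_def Ts_def using gapT by auto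
      then show ?thesis using e0' eb' that GH rH by simp
    qed
  qed
  show ?thesis
  proof (intro exI allI impI)
    fix Y' T' assume as: "\<bar>Y' - Ys\<bar> \<le> r / (16 * M) \<and> Ts \<le> T' \<and> T' \<le> Ts + r\<^sup>2 / (2048 * M ^ 6)"
    define F1 where "F1 w = \<sigma>1 * (Y w - Y')" for w
    define F2 where "F2 w = \<sigma>2 * (T w - T')" for w
    have c1: "continuous_on ({y0..y1} \<times> {t0..tb}) F1" unfolding F1_def
      by (intro continuous_intros continuous_on_subset[OF cY]) auto
    have c2: "continuous_on ({y0..y1} \<times> {t0..tb}) F2" unfolding F2_def
      by (intro continuous_intros continuous_on_subset[OF cT]) auto
    have sY: "\<bar>\<sigma>1 * (Ys - Y')\<bar> \<le> r / (16 * M)" using as s1(2)[of "Ys - Y'"] abs_minus_commute[of Ys Y'] by simp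
    have e1: "F1 (y0, t) \<le> 0 \<and> F1 (y1, t) \<ge> 0" if "t \<in> {t0..tb}" for t
    proof -
      have "F1 (y0, t) = \<sigma>1 * (Y (y0, t) - Ys) + \<sigma>1 * (Ys - Y')" unfolding F1_def by (simp add: algebra_simps)
      moreover have "F1 (y1, t) = \<sigma>1 * (Y (y1, t) - Ys) + \<sigma>1 * (Ys - Y')" unfolding F1_def by (simp add: algebra_simps)
      moreover have "r / (16 * M) \<le> 3 * r / (32 * M)" using r M0 by (simp add: field_simps)
      ultimately show ?thesis using left[of t] right[of t] that sY by auto
    qed
    have e2: "F2 (y, t0) \<le> 0 \<and> F2 (y, tb) \<ge> 0" if "y \<in> {y0..y1}" for y
      using botop[of y T'] that as unfolding F2_def Hh_def by auto
    obtain p where p: "p \<in> {y0..y1} \<times> {t0..tb}" "F1 p = 0" "F2 p = 0"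
      using PM[OF y01 t0b c1 c2 e1 e2] by blast
    have "p \<in> Q" using p(1) inQ by auto
    moreover have "hy (g p) = Y'" using p(2) s1(3) unfolding F1_def Y_def by simp
    moreover have "TB B (g p) = T'" using p(3) s2 unfolding F2_def T_def by simp
    ultimately show "\<exists>w\<in>{y0..<y0 + r} \<times> {t0..<t0 + r\<^sup>2}. hy (g w) = Y' \<and> TB B (g w) = T'"
      unfolding Q_def by blast
  qed
qed

lemma hline_form_unique:
  assumes "hline_form a b c = hline_form a' b' c'"
  shows "a = a'"
proof -
  have "(b, 0, c) \<in> hline_form a b c" unfolding hline_form_def by force
  then have "(b, 0, c) \<in> hline_form a' b' c'" using assms by simp
  then have bb: "b = b'" unfolding hline_form_def by auto
  have "(a + b, 1, b / 2 + c) \<in> hline_form a b c" unfolding hline_form_def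
    by (rule CollectI, rule exI[of _ 1]) simp
  then have "(a + b, 1, b / 2 + c) \<in> hline_form a' b' c'" using assms by simp
  then have "a + b = a' + b'" unfolding hline_form_def by auto
  then show ?thesis using bb by simp
qed

lemma rot_mem: "p \<in> rot (-\<theta>) ` V \<longleftrightarrow> rot \<theta> p \<in> V"
proof
  assume "p \<in> rot (-\<theta>) ` V"
  then obtain v where "v \<in> V" "p = rot (-\<theta>) v" by auto
  then show "rot \<theta> p \<in> V" using rot_rot(1)[of \<theta> v] by simp
next
  assume "rot \<theta> p \<in> V"
  moreover have "p = rot (-\<theta>) (rot \<theta> p)" using rot_rot(2)[of \<theta> p] by simp
  ultimately show "p \<in> rot (-\<theta>) ` V" by blast
qed

lemma angle_B:
  assumes vp: "vertical_plane V" and ang: "vplane_angle_W V \<theta> = 0"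
  shows "\<exists>B. \<forall>p \<in> rot (-\<theta>) ` V. fst p = B"
proof -
  obtain a b c where ab: "(a, b) \<noteq> (0::real, 0::real)" and V: "V = {(x, y, t). a * x + b * y = c}"
    using vp unfolding vertical_plane_def by blast
  define V' where "V' = rot (-\<theta>) ` V"
  define a' where "a' = a * cos \<theta> + b * sin \<theta>"
  define b' where "b' = - a * sin \<theta> + b * cos \<theta>"
  have memV': "p \<in> V' \<longleftrightarrow> a' * fst p + b' * fst (snd p) = c" for p
  proof -
    obtain x y t where p: "p = (x, y, t)" by (cases p) auto
    have "a * (cos \<theta> * x - sin \<theta> * y) + b * (sin \<theta> * x + cos \<theta> * y) = a' * x + b' * y"
      unfolding a'_def b'_def by (simp add: algebra_simps)
    then show ?thesis unfolding V'_def rot_mem V p rot_eq by simp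
  qed
  have ab': "(a', b') \<noteq> (0, 0)"
  proof
    assume "(a', b') = (0, 0)"
    then have z: "a' = 0" "b' = 0" by auto
    have "a = a' * cos \<theta> - b' * sin \<theta>" "b = a' * sin \<theta> + b' * cos \<theta>"
    proof -
      obtain s co where sc: "sin \<theta> = s" "cos \<theta> = co" by blast
      have one: "s * s + co * co = 1" using sc sin_cos_squared_add[of \<theta>] by (simp add: power2_eq_square)
      have "(a * co + b * s) * co - (- a * s + b * co) * s = (s * s + co * co) * a"
        "(a * co + b * s) * s + (- a * s + b * co) * co = (s * s + co * co) * b"
        by (simp_all add: algebra_simps)
      then show "a = a' * cos \<theta> - b' * sin \<theta>" "b = a' * sin \<theta> + b' * cos \<theta>"
        unfolding a'_def b'_def sc using one by simp_all
    qed
    then show False using z ab by simp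
  qed
  obtain p0 where p0: "p0 \<in> V'"
  proof (cases "a' = 0")
    case True
    then have "b' \<noteq> 0" using ab' by simp
    then have "(0, c / b', 0) \<in> V'" using memV' True by simp
    then show ?thesis using that by blast
  next
    case False
    then have "(c / a', 0, 0) \<in> V'" using memV' by simp
    then show ?thesis using that by blast
  qed
  define L0 where "L0 = {heis_mult p0 (s * (- b'), s * a', 0) | s. True}"
  have "(- b', a') \<noteq> (0, 0)" using ab' by auto
  then have "heis_hline L0" unfolding heis_hline_def L0_def
    by (intro exI[of _ p0] exI[of _ "- b'"] exI[of _ a'] conjI) auto
  moreover have "L0 \<subseteq> V'"
  proof
    fix q assume "q \<in> L0"
    then obtain s where q: "q = heis_mult p0 (s * (- b'), s * a', 0)" unfolding L0_def by blast
    obtain x y t where p0e: "p0 = (x, y, t)" by (cases p0) auto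
    have "a' * x + b' * y = c" using p0 memV' p0e by simp
    then have "a' * (x + s * - b') + b' * (y + s * a') = c" by (simp add: algebra_simps)
    then show "q \<in> V'" unfolding memV' q p0e heis_mult_def by simp
  qed
  ultimately have ex: "\<exists>L. heis_hline L \<and> L \<subseteq> V'" by blast
  define Ls where "Ls = (SOME L. heis_hline L \<and> L \<subseteq> V')"
  have Ls: "heis_hline Ls" "Ls \<subseteq> V'" using someI_ex[OF ex] unfolding Ls_def by auto
  have sl0: "hline_slope Ls = 0" using ang unfolding vplane_angle_W_def vplane_angle_def V'_def Ls_def .
  have "\<exists>a b c. Ls = hline_form a b c"
  proof (rule ccontr)
    assume "\<not> ?thesis"
    then have "hline_slope Ls = \<infinity>" unfolding hline_slope_def by simp
    then show False using sl0 by simp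
  qed
  then obtain a0 b0 c0 where L: "Ls = hline_form a0 b0 c0" by blast
  have "(THE a. \<exists>b c. Ls = hline_form a b c) = a0"
  proof (rule the_equality)
    show "\<exists>b c. Ls = hline_form a0 b c" using L by blast
    fix a assume "\<exists>b c. Ls = hline_form a b c"
    then obtain b c where "Ls = hline_form a b c" by blast
    then show "a = a0" using L hline_form_unique[of a b c a0 b0 c0] by simp
  qed
  moreover have "\<exists>a b c. Ls = hline_form a b c" using L by blast
  ultimately have "ereal \<bar>a0\<bar> = 0" using sl0 unfolding hline_slope_def by simp
  then have "\<bar>a0\<bar> = 0" by simp
  then have a00: "a0 = 0" by simp
  have "(b0, 0, c0) \<in> Ls" unfolding L hline_form_def a00 by force
  then have e1: "a' * b0 = c" using Ls(2) memV' by fastforce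
  have "(b0, 1, b0 / 2 + c0) \<in> Ls" unfolding L hline_form_def a00
    by (rule CollectI, rule exI[of _ 1]) simp
  then have e2: "a' * b0 + b' = c" using Ls(2) memV' by fastforce
  have b'0: "b' = 0" using e1 e2 by simp
  then have a'0: "a' \<noteq> 0" using ab' by simp
  show ?thesis
  proof (intro exI ballI)
    fix p assume "p \<in> rot (-\<theta>) ` V"
    then have "a' * fst p = c" using memV' b'0 unfolding V'_def by simp
    then show "fst p = c / a'" using a'0 by (simp add: field_simps)
  qed
qed

lemma four_powr: "(4::real) powr x = (2 powr x)\<^sup>2"
proof -
  have "(4::real) powr x = (2 * 2) powr x" by simp
  also have "\<dots> = 2 powr x * 2 powr x" using powr_mult[of 2 2 x] by simp
  finally show ?thesis by (simp add: power2_eq_square)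
qed

lemma dyadic_eq:
  "dyadic_rect k l n = {real_of_int k * side_len n ..< real_of_int k * side_len n + side_len n}
     \<times> {real_of_int l * (side_len n)\<^sup>2 ..< real_of_int l * (side_len n)\<^sup>2 + (side_len n)\<^sup>2}"
  unfolding dyadic_rect_def side_len_def four_powr by (simp add: algebra_simps)

lemma side_pos: "side_len n > 0" unfolding side_len_def by simp

lemma beta_extract:
  assumes "beta f V k l n < ereal \<epsilon>"
  shows "\<exists>e. 0 < e \<and> e < \<epsilon> \<and> (\<forall>t. \<exists>L. heis_hline L \<and> L \<subseteq> V \<and>
          f ` (W_hline t \<inter> dyadic_rect k l n) \<subseteq> heis_nbhd L (e * side_len n))"
proof -
  obtain x where x: "x \<in> {ereal \<epsilon> | \<epsilon>. \<epsilon> > 0 \<and>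
      (\<forall>t. \<exists>L. heis_hline L \<and> L \<subseteq> V \<and>
          f ` (W_hline t \<inter> dyadic_rect k l n) \<subseteq> heis_nbhd L (\<epsilon> * side_len n))}" "x < ereal \<epsilon>"
    using assms unfolding beta_def Inf_less_iff by blast
  then show ?thesis by auto
qed

lemma hline_ne: "heis_hline L \<Longrightarrow> L \<noteq> {}"
  unfolding heis_hline_def by auto

lemma nbhd_close:
  assumes "heis_hline L" "p \<in> heis_nbhd L d" "d < d'"
  shows "\<exists>q\<in>L. heis_dist p q < d'"
proof -
  have "Inf ((\<lambda>q. heis_dist p q) ` L) < d'" using assms(2,3) unfolding heis_nbhd_def heis_setdist_def by simp
  then obtain x where "x \<in> (\<lambda>q. heis_dist p q) ` L" "x < d'"
    using cInf_lessD[of "(\<lambda>q. heis_dist p q) ` L" d'] hline_ne[OF assms(1)] by blast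
  then show ?thesis by auto
qed

lemma hline_rot_TB:
  assumes L: "heis_hline L" and sub: "rot c ` L \<subseteq> {p. fst p = B}" and q: "q \<in> L" and q': "q' \<in> L"
  shows "TB B (rot c q) = TB B (rot c q')"
proof -
  obtain p0 a b where Ld: "L = {heis_mult p0 (s * a, s * b, 0) | s. True}"
    using L unfolding heis_hline_def by blast
  have p0L: "p0 \<in> L" unfolding Ld
    by (rule CollectI, rule exI[of _ 0]) (cases p0, simp add: heis_mult_def)
  have fP: "fst (rot c p0) = B" using sub p0L by auto
  have key: "TB B (rot c z) = TB B (rot c p0)" if zL: "z \<in> L" for z
  proof -
    obtain s where z: "z = heis_mult p0 (s * a, s * b, 0)" using zL unfolding Ld by blast
    obtain a' b' where ab': "rot c (s * a, s * b, 0) = (s * a', s * b', 0)" using rot_hor by blast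
    have rz: "rot c z = heis_mult (rot c p0) (s * a', s * b', 0)" unfolding z rot_mult ab' ..
    have "fst (rot c z) = B" using sub zL by auto
    then show ?thesis unfolding rz using hline_TB[OF fP] by simp
  qed
  show ?thesis using key[OF q] key[OF q'] by simp
qed

lemma dist_W:
  assumes "fst u = 0" "fst v = 0"
  shows "heis_dist u v = dpar (fst (snd u), snd (snd u)) (fst (snd v), snd (snd v))"
proof -
  obtain y t where u: "u = (0, y, t)" using assms(1) by (cases u) auto
  obtain y' t' where v: "v = (0, y', t')" using assms(2) by (cases v) auto
  show ?thesis unfolding u v heis_dist_explicit dpar_def by simp
qed

lemma rot_proj: "rot (-\<theta>) (proj_Pi_theta \<theta> x) = proj_Pi (rot (-\<theta>) x)"
  unfolding proj_Pi_theta_def by (simp add: rot_rot)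


theorem corollary5p5:
  fixes M :: real
  assumes "M \<ge> 1"
  shows "\<exists>\<delta>>0. \<exists>\<epsilon>>0. \<forall>(f :: wpt \<Rightarrow> heis) (\<theta> :: real) (V :: heis set) (k :: int) (l :: int) (n :: int).
           bilipschitz M f \<and> -(pi / 2) \<le> \<theta> \<and> \<theta> < pi / 2 \<and>
           vertical_plane V \<and> vplane_angle_W V \<theta> = 0 \<and>
           beta f V k l n < ereal \<epsilon>
           \<longrightarrow> hausdorff_measure heis_dist 3 (proj_Pi_theta \<theta> ` f ` dyadic_rect k l n)
               \<ge> ennreal \<delta> * hausdorff_measure dpar 3 (dyadic_rect k l n)"
proof -
  have M1: "M \<ge> 1" by (rule assms)
  have M0: "M > 0" using M1 by simp
  define \<delta> where "\<delta> = 1 / (65536 * M ^ 7)"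
  define \<epsilon> where "\<epsilon> = 1 / (128 * M ^ 3)"
  have d0: "\<delta> > 0" and e0: "\<epsilon> > 0" unfolding \<delta>_def \<epsilon>_def using M0 by auto
  have main: "hausdorff_measure heis_dist 3 (proj_Pi_theta \<theta> ` f ` dyadic_rect k l n)
               \<ge> ennreal \<delta> * hausdorff_measure dpar 3 (dyadic_rect k l n)"
    if H: "bilipschitz M f" "vertical_plane V" "vplane_angle_W V \<theta> = 0" "beta f V k l n < ereal \<epsilon>"
    for f \<theta> V k l n
  proof -
    define r where "r = side_len n"
    have r: "r > 0" unfolding r_def by (rule side_pos)
    define y0 where "y0 = real_of_int k * r"
    define t0 where "t0 = real_of_int l * r\<^sup>2"
    define Q where "Q = dyadic_rect k l n"
    have Qeq: "Q = {y0..<y0+r} \<times> {t0..<t0+r\<^sup>2}" unfolding Q_def y0_def t0_def r_def by (rule dyadic_eq)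
    define g where "g w = rot (-\<theta>) (f w)" for w
    have bl: "dpar w w' / M \<le> heis_dist (g w) (g w')" for w w'
      using H(1) unfolding bilipschitz_def g_def rot_dist by blast
    have bu: "heis_dist (g w) (g w') \<le> M * dpar w w'" for w w'
      using H(1) unfolding bilipschitz_def g_def rot_dist by blast
    obtain B where allB: "\<And>p. p \<in> rot (-\<theta>) ` V \<Longrightarrow> fst p = B" using angle_B[OF H(2,3)] by blast
    obtain e where e: "0 < e" "e < \<epsilon>" and lines: "\<And>t. \<exists>L. heis_hline L \<and> L \<subseteq> V \<and>
          f ` (W_hline t \<inter> dyadic_rect k l n) \<subseteq> heis_nbhd L (e * side_len n)"
      using beta_extract[OF H(4)] by blast
    define \<rho> where "\<rho> = r / (128 * M ^ 3)"
    have rho_eq: "\<epsilon> * r = \<rho>" unfolding \<epsilon>_def \<rho>_def by simp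
    have "e * r < \<epsilon> * r" using e r by (intro mult_strict_right_mono) auto
    then have er: "e * r < \<rho>" using rho_eq by simp
    have close: "\<exists>q\<in>L. heis_dist (f w) q < \<rho>"
      if L: "heis_hline L" "f ` (W_hline (snd w) \<inter> dyadic_rect k l n) \<subseteq> heis_nbhd L (e * side_len n)"
        and wQ: "w \<in> Q" for L w
    proof -
      have "w \<in> W_hline (snd w) \<inter> dyadic_rect k l n" using wQ unfolding Q_def W_hline_def
        by (cases w) auto
      then have "f w \<in> heis_nbhd L (e * r)" using L(2) unfolding r_def by blast
      then show ?thesis using nbhd_close[OF L(1) _ er] by blast
    qed
    have near: "\<exists>q. fst q = B \<and> heis_dist (g w) q \<le> r / (128 * M ^ 3)"
      if wQ: "w \<in> {y0..<y0+r} \<times> {t0..<t0+r\<^sup>2}" for w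
    proof -
      obtain L where L: "heis_hline L" "L \<subseteq> V"
          "f ` (W_hline (snd w) \<inter> dyadic_rect k l n) \<subseteq> heis_nbhd L (e * side_len n)"
        using lines by blast
      obtain q where q: "q \<in> L" "heis_dist (f w) q < \<rho>" using close[OF L(1,3)] wQ Qeq by blast
      have "fst (rot (-\<theta>) q) = B" using allB q(1) L(2) by blast
      moreover have "heis_dist (g w) (rot (-\<theta>) q) \<le> r / (128 * M ^ 3)"
        using q(2) unfolding g_def rot_dist \<rho>_def by simp
      ultimately show ?thesis by blast
    qed
    have slice: "\<bar>TB B (g w) - TB B (g w')\<bar> \<le> 4 * (r / (128 * M ^ 3))\<^sup>2"
      if wQ: "w \<in> {y0..<y0+r} \<times> {t0..<t0+r\<^sup>2}" and wQ': "w' \<in> {y0..<y0+r} \<times> {t0..<t0+r\<^sup>2}"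
        and sn: "snd w = snd w'" for w w'
    proof -
      obtain L where L: "heis_hline L" "L \<subseteq> V"
          "f ` (W_hline (snd w) \<inter> dyadic_rect k l n) \<subseteq> heis_nbhd L (e * side_len n)"
        using lines by blast
      obtain q where q: "q \<in> L" "heis_dist (f w) q < \<rho>" using close[OF L(1,3)] wQ Qeq by blast
      obtain q' where q': "q' \<in> L" "heis_dist (f w') q' < \<rho>" using close[OF L(1), of w'] L(3) sn wQ' Qeq by auto
      have sub: "rot (-\<theta>) ` L \<subseteq> {p. fst p = B}" using allB L(2) by blast
      have fq: "fst (rot (-\<theta>) q) = B" and fq': "fst (rot (-\<theta>) q') = B" using sub q(1) q'(1) by auto
      have n1: "\<bar>TB B (g w) - TB B (rot (-\<theta>) q)\<bar> \<le> 2 * \<rho>\<^sup>2"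
        using near_est(2)[OF fq, of "g w" \<rho>] q(2) unfolding g_def rot_dist by simp
      have n2: "\<bar>TB B (g w') - TB B (rot (-\<theta>) q')\<bar> \<le> 2 * \<rho>\<^sup>2"
        using near_est(2)[OF fq', of "g w'" \<rho>] q'(2) unfolding g_def rot_dist by simp
      have eqT: "TB B (rot (-\<theta>) q) = TB B (rot (-\<theta>) q')" by (rule hline_rot_TB[OF L(1) sub q(1) q'(1)])
      show ?thesis using n1 n2 eqT unfolding \<rho>_def by linarith
    qed
    obtain Ys Ts where core_res: "\<And>Y' T'. \<bar>Y' - Ys\<bar> \<le> r / (16 * M) \<and> Ts \<le> T' \<and> T' \<le> Ts + r\<^sup>2 / (2048 * M ^ 6) \<Longrightarrow>
           (\<exists>w \<in> {y0..<y0+r} \<times> {t0..<t0+r\<^sup>2}. hy (g w) = Y' \<and> TB B (g w) = T')"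
      using core[OF M1 r bl bu near slice] by blast
    define P where "P = {z :: real \<times> real. fst z \<in> {Ys - r / (16 * M) .. Ys + r / (16 * M)}
        \<and> snd z - B * fst z \<in> {Ts .. Ts + r\<^sup>2 / (2048 * M ^ 6)}}"
    have Pm: "emeasure lborel P = ennreal ((Ys + r / (16 * M) - (Ys - r / (16 * M))) * (Ts + r\<^sup>2 / (2048 * M ^ 6) - Ts))"
      unfolding P_def by (rule para_meas(2)) (use r M0 in auto)
    define c where "c = r ^ 3 / (65536 * M ^ 7)"
    have c0: "c \<ge> 0" unfolding c_def using r M0 by simp
    have Pc: "ennreal (4 * c) \<le> emeasure lborel P"
    proof -
      have "(Ys + r / (16 * M) - (Ys - r / (16 * M))) * (Ts + r\<^sup>2 / (2048 * M ^ 6) - Ts) = 4 * c"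
      proof -
        have m7: "M ^ 7 = M * M ^ 6" by (simp add: power_Suc[symmetric])
        show ?thesis unfolding c_def m7 using M0 by (simp add: field_simps power2_eq_square power3_eq_cube)
      qed
      then show ?thesis unfolding Pm by simp
    qed
    define S where "S = proj_Pi_theta \<theta> ` f ` dyadic_rect k l n"
    define hh where "hh p = (fst (snd (rot (-\<theta>) p)), snd (snd (rot (-\<theta>) p)))" for p
    have S0: "fst (rot (-\<theta>) p) = 0" if "p \<in> S" for p
      using that unfolding S_def by (auto simp: rot_proj proj_Pi_def split: prod.splits)
    have hl: "dpar (hh p) (hh p') \<le> heis_dist p p'" if "p \<in> S" "p' \<in> S" for p p'
    proof -
      have "heis_dist p p' = heis_dist (rot (-\<theta>) p) (rot (-\<theta>) p')" by (simp add: rot_dist)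
      also have "\<dots> = dpar (hh p) (hh p')" unfolding hh_def by (rule dist_W[OF S0[OF that(1)] S0[OF that(2)]])
      finally show ?thesis by simp
    qed
    have PS: "P \<subseteq> hh ` S"
    proof
      fix z assume zP: "z \<in> P"
      obtain Y' Z' where z: "z = (Y', Z')" by (cases z) auto
      have "\<bar>Y' - Ys\<bar> \<le> r / (16 * M) \<and> Ts \<le> Z' - B * Y' \<and> Z' - B * Y' \<le> Ts + r\<^sup>2 / (2048 * M ^ 6)"
        using zP unfolding P_def z by (auto simp: abs_le_iff)
      then obtain w where w: "w \<in> {y0..<y0+r} \<times> {t0..<t0+r\<^sup>2}" "hy (g w) = Y'" "TB B (g w) = Z' - B * Y'"
        using core_res by blast
      define p where "p = proj_Pi_theta \<theta> (f w)"
      have pS: "p \<in> S" unfolding p_def S_def using w(1) Qeq Q_def by auto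
      obtain x y t where gw: "g w = (x, y, t)" by (cases "g w") auto
      have "rot (-\<theta>) p = proj_Pi (g w)" unfolding p_def g_def by (rule rot_proj)
      then have "hh p = (y, t + x * y / 2)" unfolding hh_def gw proj_Pi_def by simp
      also have "\<dots> = z" using w(2,3) unfolding z gw hy_def TB_def by auto
      finally show "z \<in> hh ` S" using pS by blast
    qed
    have low: "ennreal c \<le> hausdorff_measure heis_dist 3 S" by (rule LB[OF hl PS Pc c0])
    have up: "hausdorff_measure dpar 3 (dyadic_rect k l n) \<le> ennreal (r ^ 3)"
      using UB[OF r, of y0 t0] Qeq unfolding Q_def by simp
    have "ennreal \<delta> * hausdorff_measure dpar 3 (dyadic_rect k l n) \<le> ennreal \<delta> * ennreal (r ^ 3)"
      by (rule mult_left_mono[OF up]) simp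
    also have "\<dots> = ennreal c" unfolding c_def \<delta>_def using M0 r
      by (simp add: ennreal_mult[symmetric] field_simps)
    also have "\<dots> \<le> hausdorff_measure heis_dist 3 S" by (rule low)
    finally show ?thesis unfolding S_def .
  qed
  show ?thesis using d0 e0 main by blast
qed

end
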